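(* Let $R\cong \prod_{i=1}^{n} D_{i}$ be a finite direct product of rings where each $D_{i}$ is either a Dedekind domain or an Artinian, local principal ideal ring (equivalently, $R$ is a multiplication ring with finitely many minimal prime ideals), and let $1=e_1+\cdots+e_n$ be the corresponding decomposition into central orthogonal idempotents. Let $M$ be an $R$-module and $M_i:=e_iM$, so $M=\bigoplus_{i=1}^n M_i$. Then $M$ is a faithful multiplication $R$-module if and only if for each $i=1,\ldots,n$, either $M_i\cong D_i$, or $D_i$ is a Dedekind domain and $M_i\cong I_i$ for some nonzero ideal $I_i$ of $D_i$.
   Context: All rings are commutative with $1$ and all modules are unital. A ring $R$ is a multiplication ring if whenever $I,J$ are ideals of $R$ with $J\subseteq I$, there is an ideal $I'$ of $R$ with $J=I'I$. An $R$-module $M$ is a multiplication module if every submodule of $M$ equals $IM$ for some ideal $I$ of $R$. $M$ is faithful if its annihilator $\mathrm{ann}_R(M)=\{r\in R: rM=0\}$ is $0$. *)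

theory Defs
  imports Complex_Main
begin

text \<open>Ring-theoretic notions for the ring D = e R (a direct factor of the commutative
ring R, with identity the idempotent e), computed inside R.\<close>

definition factor_ring :: "'a::comm_ring_1 \<Rightarrow> 'a set" where
  "factor_ring e = {e * r | r. True}"

definition ideal_in :: "'a::comm_ring_1 set \<Rightarrow> 'a set \<Rightarrow> bool" where
  "ideal_in D I \<longleftrightarrow> I \<subseteq> D \<and> 0 \<in> I \<and> (\<forall>x\<in>I. \<forall>y\<in>I. x + y \<in> I)
      \<and> (\<forall>r\<in>D. \<forall>x\<in>I. r * x \<in> I)"

definition ideal_gen_in :: "'a::comm_ring_1 set \<Rightarrow> 'a set \<Rightarrow> 'a set" where
  "ideal_gen_in D F = {x. \<exists>c. (\<forall>f\<in>F. c f \<in> D) \<and> x = (\<Sum>f\<in>F. c f * f)}"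

definition prime_ideal_in :: "'a::comm_ring_1 set \<Rightarrow> 'a set \<Rightarrow> bool" where
  "prime_ideal_in D P \<longleftrightarrow> ideal_in D P \<and> P \<noteq> D
      \<and> (\<forall>a\<in>D. \<forall>b\<in>D. a * b \<in> P \<longrightarrow> a \<in> P \<or> b \<in> P)"

definition maximal_ideal_in :: "'a::comm_ring_1 set \<Rightarrow> 'a set \<Rightarrow> bool" where
  "maximal_ideal_in D M \<longleftrightarrow> ideal_in D M \<and> M \<noteq> D
      \<and> (\<forall>J. ideal_in D J \<and> M \<subseteq> J \<longrightarrow> J = M \<or> J = D)"

definition is_domain_at :: "'a::comm_ring_1 \<Rightarrow> bool" where
  "is_domain_at e \<longleftrightarrow> e \<noteq> 0 \<and>
     (\<forall>a\<in>factor_ring e. \<forall>b\<in>factor_ring e. a * b = 0 \<longrightarrow> a = 0 \<or> b = 0)"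

definition noetherian_at :: "'a::comm_ring_1 \<Rightarrow> bool" where
  "noetherian_at e \<longleftrightarrow> (\<forall>I. ideal_in (factor_ring e) I \<longrightarrow>
     (\<exists>F. finite F \<and> F \<subseteq> I \<and> I = ideal_gen_in (factor_ring e) F))"

text \<open>Integrally closed in its field of fractions: if a/b (b nonzero) satisfies a monic
polynomial over D, i.e. a^n + c_1 a^(n-1) b + ... + c_n b^n = 0, then a/b lies in D.\<close>
definition integrally_closed_at :: "'a::comm_ring_1 \<Rightarrow> bool" where
  "integrally_closed_at e \<longleftrightarrow> (\<forall>a\<in>factor_ring e. \<forall>b\<in>factor_ring e. b \<noteq> 0 \<longrightarrow>
     (\<exists>n>0. \<exists>c. (\<forall>j. c j \<in> factor_ring e) \<and>
         a ^ n + (\<Sum>j\<in>{1..n}. c j * a ^ (n - j) * b ^ j) = 0) \<longrightarrow>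
     (\<exists>d\<in>factor_ring e. a = d * b))"

definition dedekind_at :: "'a::comm_ring_1 \<Rightarrow> bool" where
  "dedekind_at e \<longleftrightarrow> is_domain_at e \<and> noetherian_at e \<and> integrally_closed_at e \<and>
     (\<forall>P. prime_ideal_in (factor_ring e) P \<and> P \<noteq> {0} \<longrightarrow> maximal_ideal_in (factor_ring e) P)"

definition artinian_at :: "'a::comm_ring_1 \<Rightarrow> bool" where
  "artinian_at e \<longleftrightarrow> (\<forall>f :: nat \<Rightarrow> 'a set. (\<forall>k. ideal_in (factor_ring e) (f k)) \<and>
     (\<forall>k. f (Suc k) \<subseteq> f k) \<longrightarrow> (\<exists>N. \<forall>k\<ge>N. f k = f N))"

definition local_at :: "'a::comm_ring_1 \<Rightarrow> bool" where
  "local_at e \<longleftrightarrow> (\<exists>!M. maximal_ideal_in (factor_ring e) M)"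

definition pir_at :: "'a::comm_ring_1 \<Rightarrow> bool" where
  "pir_at e \<longleftrightarrow> (\<forall>I. ideal_in (factor_ring e) I \<longrightarrow>
     (\<exists>a\<in>factor_ring e. I = {d * a | d. d \<in> factor_ring e}))"

definition artinian_local_pir_at :: "'a::comm_ring_1 \<Rightarrow> bool" where
  "artinian_local_pir_at e \<longleftrightarrow> artinian_at e \<and> local_at e \<and> pir_at e"

definition ideal :: "'a::comm_ring_1 set \<Rightarrow> bool" where
  "ideal I \<longleftrightarrow> ideal_in UNIV I"

definition faithful_module :: "('a::comm_ring_1 \<Rightarrow> 'm::ab_group_add \<Rightarrow> 'm) \<Rightarrow> bool" where
  "faithful_module scale \<longleftrightarrow> (\<forall>r. (\<forall>m. scale r m = 0) \<longrightarrow> r = 0)"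

definition multiplication_module :: "('a::comm_ring_1 \<Rightarrow> 'm::ab_group_add \<Rightarrow> 'm) \<Rightarrow> bool" where
  "multiplication_module scale \<longleftrightarrow> (\<forall>N. module.subspace scale N \<longrightarrow>
     (\<exists>I. ideal I \<and> N = module.span scale {scale r m | r m. r \<in> I}))"

definition module_iso_sets ::
  "('a::comm_ring_1 \<Rightarrow> 'm::ab_group_add \<Rightarrow> 'm) \<Rightarrow> 'm set \<Rightarrow>
   ('a \<Rightarrow> 'n::ab_group_add \<Rightarrow> 'n) \<Rightarrow> 'n set \<Rightarrow> bool" where
  "module_iso_sets scale1 A scale2 B \<longleftrightarrow> (\<exists>f. bij_betw f A B \<and>
     (\<forall>x\<in>A. \<forall>y\<in>A. f (x + y) = f x + f y) \<and>
     (\<forall>r. \<forall>x\<in>A. f (scale1 r x) = scale2 r (f x)))"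

end

theory Submission
  imports Defs
begin


locale fr =
  fixes e :: "'a::comm_ring_1"
  assumes idem: "e * e = e"
begin

abbreviation "DD \<equiv> factor_ring e"

lemma memD: "x \<in> DD \<longleftrightarrow> e * x = x"
proof
  assume "x \<in> DD" then obtain r where "x = e * r" by (auto simp: factor_ring_def)
  then show "e * x = x" by (simp add: mult.assoc[symmetric] idem)
next
  assume "e * x = x" then show "x \<in> DD" unfolding factor_ring_def by (metis (mono_tags) mem_Collect_eq)
qed

lemma memD': "x \<in> DD \<Longrightarrow> x * e = x" by (simp add: memD mult.commute)

lemma D0[simp]: "0 \<in> DD" by (simp add: memD)
lemma De[simp]: "e \<in> DD" by (simp add: memD idem)
lemma Dadd[intro]: "x \<in> DD \<Longrightarrow> y \<in> DD \<Longrightarrow> x + y \<in> DD" by (simp add: memD distrib_left)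
lemma Dminus[intro]: "x \<in> DD \<Longrightarrow> - x \<in> DD" by (simp add: memD)
lemma Ddiff[intro]: "x \<in> DD \<Longrightarrow> y \<in> DD \<Longrightarrow> x - y \<in> DD" by (simp add: memD right_diff_distrib)
lemma Dmult1[intro]: "x \<in> DD \<Longrightarrow> x * y \<in> DD" by (simp add: memD mult.assoc[symmetric])
lemma Dmult2[intro]: "y \<in> DD \<Longrightarrow> x * y \<in> DD" by (metis Dmult1 mult.commute)
lemma Dpow[intro]: "x \<in> DD \<Longrightarrow> n > 0 \<Longrightarrow> x ^ n \<in> DD"
  by (cases n) auto
lemma Dsum[intro]: "(\<And>i. i \<in> A \<Longrightarrow> f i \<in> DD) \<Longrightarrow> sum f A \<in> DD"
  by (induction A rule: infinite_finite_induct) auto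
lemma De_mult: "x \<in> DD \<Longrightarrow> e * x = x" by (simp add: memD)
lemma Dmult_e: "x \<in> DD \<Longrightarrow> x * e = x" by (simp add: memD')

lemma ideal_inD:
  assumes "ideal_in DD I"
  shows "I \<subseteq> DD" "0 \<in> I" "x \<in> I \<Longrightarrow> y \<in> I \<Longrightarrow> x + y \<in> I" "x \<in> I \<Longrightarrow> r * x \<in> I"
    "x \<in> I \<Longrightarrow> x * r \<in> I" "x \<in> I \<Longrightarrow> - x \<in> I" "x \<in> I \<Longrightarrow> y \<in> I \<Longrightarrow> x - y \<in> I"
proof -
  show 1: "I \<subseteq> DD" "0 \<in> I" using assms by (auto simp: ideal_in_def)
  show 2: "x \<in> I \<Longrightarrow> y \<in> I \<Longrightarrow> x + y \<in> I" for x y using assms by (auto simp: ideal_in_def)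
  have 3: "x \<in> I \<Longrightarrow> r * x \<in> I" for x r
  proof -
    assume x: "x \<in> I"
    have "e * r \<in> DD" by auto
    hence "(e * r) * x \<in> I" using assms x by (auto simp: ideal_in_def)
    moreover have "e * x = x" using x 1 De_mult by blast
    hence "(e*r)*x = r * x" by (metis mult.left_commute mult.commute)
    ultimately show ?thesis by simp
  qed
  show "x \<in> I \<Longrightarrow> r * x \<in> I" using 3 .
  show "x \<in> I \<Longrightarrow> x * r \<in> I" using 3 by (metis mult.commute)
  show 4: "x \<in> I \<Longrightarrow> - x \<in> I" using 3[of x "-1"] by simp
  show "x \<in> I \<Longrightarrow> y \<in> I \<Longrightarrow> x - y \<in> I" using 2[of x "-y"] 3[of y "-1"] by simp
qed

lemma ideal_inI:
  assumes "I \<subseteq> DD" "0 \<in> I" "\<And>x y. x \<in> I \<Longrightarrow> y \<in> I \<Longrightarrow> x + y \<in> I" "\<And>x r. x \<in> I \<Longrightarrow> r * x \<in> I"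
  shows "ideal_in DD I"
  using assms by (auto simp: ideal_in_def)

lemma ideal_sum: "ideal_in DD I \<Longrightarrow> (\<And>i. i \<in> A \<Longrightarrow> f i \<in> I) \<Longrightarrow> sum f A \<in> I"
  by (induction A rule: infinite_finite_induct) (auto intro: ideal_inD)

lemma ideal_D: "ideal_in DD DD" by (rule ideal_inI) auto

lemma ideal_e: assumes "ideal_in DD I" "e \<in> I" shows "I = DD"
proof
  show "I \<subseteq> DD" using ideal_inD(1)[OF assms(1)] .
  show "DD \<subseteq> I"
  proof
    fix x assume "x \<in> DD"
    hence "x = x * e" by (simp add: Dmult_e)
    thus "x \<in> I" using ideal_inD(4)[OF assms] by metis
  qed
qed

lemma noeth_max:
  assumes N: "noetherian_at e" and S: "S \<noteq> {}" "\<And>I. I \<in> S \<Longrightarrow> ideal_in DD I"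
  shows "\<exists>M\<in>S. \<forall>X\<in>S. M \<subseteq> X \<longrightarrow> X = M"
proof (rule subset_Zorn_nonempty[OF S(1)])
  fix C assume C: "C \<noteq> {}" "subset.chain S C"
  have chain: "\<And>A B. A \<in> C \<Longrightarrow> B \<in> C \<Longrightarrow> A \<subseteq> B \<or> B \<subseteq> A" using C(2) by (auto simp: subset.chain_def)
  have CS: "C \<subseteq> S" using C(2) by (auto simp: subset.chain_def)
  have Ci: "\<And>A. A \<in> C \<Longrightarrow> ideal_in DD A" using CS S(2) by blast
  have id: "ideal_in DD (\<Union>C)"
  proof (rule ideal_inI)
    show "\<Union>C \<subseteq> DD" using Ci ideal_inD(1) by (meson Union_least)
    obtain A0 where "A0 \<in> C" using C(1) by blast
    then show "0 \<in> \<Union>C" using Ci ideal_inD(2) by (meson UnionI)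
    show "x + y \<in> \<Union>C" if xy: "x \<in> \<Union>C" "y \<in> \<Union>C" for x y
    proof -
      obtain A B where AB: "A \<in> C" "B \<in> C" "x \<in> A" "y \<in> B" using xy by auto
      show ?thesis
      proof (cases "A \<subseteq> B")
        case True
        then show ?thesis using AB ideal_inD(3)[OF Ci[OF AB(2)], of x y] by blast
      next
        case False
        then have "B \<subseteq> A" using chain[OF AB(1,2)] by blast
        then show ?thesis using AB ideal_inD(3)[OF Ci[OF AB(1)], of x y] by blast
      qed
    qed
    show "r * x \<in> \<Union>C" if "x \<in> \<Union>C" for x r
    proof -
      obtain A where "A \<in> C" "x \<in> A" using \<open>x \<in> \<Union>C\<close> by blast
      then show ?thesis using ideal_inD(4)[OF Ci, of A x r] by blast
    qed
  qed
  then obtain F where F: "finite F" "F \<subseteq> \<Union>C" "\<Union>C = ideal_gen_in DD F"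
    using N[unfolded noetherian_at_def, rule_format, OF id] by blast
  obtain B where B: "B \<in> C" "F \<subseteq> B"
    using finite_subset_Union_chain[OF F(1) F(2) C(1) C(2)] by blast
  have Bi: "ideal_in DD B" using B Ci by blast
  have "ideal_gen_in DD F \<subseteq> B"
  proof
    fix x assume "x \<in> ideal_gen_in DD F"
    then obtain c where "x = (\<Sum>f\<in>F. c f * f)" by (auto simp: ideal_gen_in_def)
    moreover have "(\<Sum>f\<in>F. c f * f) \<in> B"
      by (rule ideal_sum[OF Bi]) (use ideal_inD(4)[OF Bi] B(2) in blast)
    ultimately show "x \<in> B" by simp
  qed
  hence "\<Union>C = B" using F(3) B(1) by blast
  then show "\<Union>C \<in> S" using B CS by auto
qed

lemma max_ideal_exists:
  assumes N: "noetherian_at e" and I: "ideal_in DD I" "I \<noteq> DD"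
  shows "\<exists>P. maximal_ideal_in DD P \<and> I \<subseteq> P"
proof -
  let ?S = "{J. ideal_in DD J \<and> I \<subseteq> J \<and> J \<noteq> DD}"
  obtain P where P: "P \<in> ?S" "\<forall>X\<in>?S. P \<subseteq> X \<longrightarrow> X = P"
    using noeth_max[OF N, of ?S] I by blast
  have "maximal_ideal_in DD P" unfolding maximal_ideal_in_def using P by blast
  then show ?thesis using P by blast
qed

end



inductive_set idprod :: "'a::comm_ring_1 set \<Rightarrow> 'a set \<Rightarrow> 'a set" for I J where
  ip0: "0 \<in> idprod I J"
| ipS: "u \<in> I \<Longrightarrow> v \<in> J \<Longrightarrow> x \<in> idprod I J \<Longrightarrow> u * v + x \<in> idprod I J"

lemma idprod_add: "x \<in> idprod I J \<Longrightarrow> y \<in> idprod I J \<Longrightarrow> x + y \<in> idprod I J"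
proof (induction x rule: idprod.induct)
  case ip0 then show ?case by simp
next
  case (ipS u v x)
  then have "u * v + (x + y) \<in> idprod I J" by (intro idprod.ipS) auto
  then show ?case by (simp add: add.assoc)
qed

lemma idprod_single: "u \<in> I \<Longrightarrow> v \<in> J \<Longrightarrow> u * v \<in> idprod I J"
  using ipS[OF _ _ ip0, of u I v J] by simp

context fr
begin

definition pr :: "'a \<Rightarrow> 'a set" where "pr a = {a * d | d. d \<in> DD}"

lemma pr_mult: "a \<in> DD \<Longrightarrow> a * r \<in> pr a"
proof -
  assume a: "a \<in> DD"
  have "a * r = a * (e * r)" using Dmult_e[OF a] by (simp add: mult.assoc[symmetric])
  moreover have "e * r \<in> DD" by (rule Dmult1) simp
  ultimately show "a * r \<in> pr a" unfolding pr_def by blast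
qed

lemma pr_self: "a \<in> DD \<Longrightarrow> a \<in> pr a"
  using pr_mult[of a e] Dmult_e by simp

lemma pr_ideal: assumes a: "a \<in> DD" shows "ideal_in DD (pr a)"
proof (rule ideal_inI)
  show "pr a \<subseteq> DD" unfolding pr_def using a by auto
  show "0 \<in> pr a" using pr_mult[OF a, of 0] by simp
  show "x + y \<in> pr a" if "x \<in> pr a" "y \<in> pr a" for x y
  proof -
    from that obtain d d' where "x = a * d" "y = a * d'" unfolding pr_def by blast
    then have "x + y = a * (d + d')" by (simp add: distrib_left)
    then show ?thesis using pr_mult[OF a] by simp
  qed
  show "r * x \<in> pr a" if "x \<in> pr a" for x r
  proof -
    from that obtain d where "x = a * d" unfolding pr_def by blast
    then have "r * x = a * (r * d)" by (simp add: mult.left_commute)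
    then show ?thesis using pr_mult[OF a] by simp
  qed
qed

lemma prE: "x \<in> pr a \<Longrightarrow> (\<And>d. d \<in> DD \<Longrightarrow> x = a * d \<Longrightarrow> P) \<Longrightarrow> P"
  unfolding pr_def by blast

lemma idprod_D: "x \<in> idprod I J \<Longrightarrow> I \<subseteq> DD \<Longrightarrow> x \<in> DD"
  by (induction x rule: idprod.induct) auto

lemma idprod_mult: "x \<in> idprod I J \<Longrightarrow> ideal_in DD I \<Longrightarrow> r * x \<in> idprod I J"
proof (induction x rule: idprod.induct)
  case ip0 then show ?case by (simp add: idprod.ip0)
next
  case (ipS u v x)
  have "r * (u * v + x) = (r * u) * v + r * x" by (simp add: algebra_simps)
  moreover have "r * u \<in> I" using ipS(1) ideal_inD(4)[OF ipS(5)] by blast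
  ultimately show ?case using idprod.ipS[OF _ ipS(2) ipS(4)[OF ipS(5)]] by simp
qed

lemma idprod_ideal: "ideal_in DD I \<Longrightarrow> ideal_in DD (idprod I J)"
  apply (rule ideal_inI)
  using idprod_D ideal_inD(1) apply (meson subsetI)
  apply (rule ip0)
  apply (erule (1) idprod_add)
  by (erule (1) idprod_mult)

lemma max_prime:
  assumes P: "maximal_ideal_in DD P" and x: "x \<in> DD" "y \<in> DD" "x * y \<in> P"
  shows "x \<in> P \<or> y \<in> P"
proof (rule ccontr)
  assume nx: "\<not> (x \<in> P \<or> y \<in> P)"
  have Pi: "ideal_in DD P" and PD: "P \<noteq> DD" and Pm: "\<And>J. ideal_in DD J \<Longrightarrow> P \<subseteq> J \<Longrightarrow> J = P \<or> J = DD"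
    using P unfolding maximal_ideal_in_def by auto
  let ?J = "{p + x * d | p d. p \<in> P \<and> d \<in> DD}"
  have Ji: "ideal_in DD ?J"
  proof (rule ideal_inI)
    show "?J \<subseteq> DD"
    proof
      fix z assume "z \<in> ?J"
      then obtain p d where "z = p + x * d" "p \<in> P" by blast
      then show "z \<in> DD" using ideal_inD(1)[OF Pi] x(1) by (simp add: Dadd Dmult1 subset_iff)
    qed
    have "(0::'a) = 0 + x * 0" by simp
    then show "0 \<in> ?J" using ideal_inD(2)[OF Pi] D0 by blast
    show "a + b \<in> ?J" if ab: "a \<in> ?J" "b \<in> ?J" for a b
    proof -
      obtain p d p' d' where "a = p + x * d" "b = p' + x * d'" "p \<in> P" "d \<in> DD" "p' \<in> P" "d' \<in> DD"
        using ab by blast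
      then have "a + b = (p+p') + x*(d+d')" "p + p' \<in> P" "d + d' \<in> DD"
        using ideal_inD(3)[OF Pi] by (auto simp: algebra_simps)
      then show ?thesis by blast
    qed
    show "r * a \<in> ?J" if ab: "a \<in> ?J" for a r
    proof -
      obtain p d where "a = p + x * d" "p \<in> P" "d \<in> DD" using ab by blast
      then have "r * a = (r*p) + x*(r*d)" "r*p \<in> P" "r*d \<in> DD"
        using ideal_inD(4)[OF Pi] by (auto simp: algebra_simps)
      then show ?thesis by blast
    qed
  qed
  have "P \<subseteq> ?J"
  proof
    fix z assume "z \<in> P"
    moreover have "z = z + x * 0" by simp
    ultimately show "z \<in> ?J" using D0 by blast
  qed
  moreover have "x \<in> ?J"
  proof -
    have "x = 0 + x * e" using x Dmult_e by simp
    then show ?thesis using ideal_inD(2)[OF Pi] De by blast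
  qed
  ultimately have "?J = DD" using Pm[OF Ji] nx by blast
  then have "e \<in> ?J" using De by simp
  then obtain p d where pd: "e = p + x * d" "p \<in> P" "d \<in> DD" by blast
  have "y = y * e" using x Dmult_e by simp
  also have "\<dots> = y * p + (x * y) * d" using pd by (simp add: algebra_simps)
  finally have "y \<in> P" using ideal_inD(3)[OF Pi, of "y*p" "x*y*d"] ideal_inD(4)[OF Pi, of p y] ideal_inD(5)[OF Pi, of "x*y" d] pd x by simp
  then show False using nx by blast
qed

end



context fr
begin

lemma noeth_maxE:
  assumes N: "noetherian_at e" and "A \<in> S" and "\<And>I. I \<in> S \<Longrightarrow> ideal_in DD I"
  obtains M where "M \<in> S" "\<And>X. X \<in> S \<Longrightarrow> M \<subseteq> X \<Longrightarrow> X = M"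
proof -
  have "S \<noteq> {}" using assms(2) by blast
  have "\<exists>M\<in>S. \<forall>X\<in>S. M \<subseteq> X \<longrightarrow> X = M"
    by (rule noeth_max[OF N]) (use assms in auto)
  then show ?thesis using that by blast
qed

lemma dom0: "is_domain_at e \<Longrightarrow> x \<in> DD \<Longrightarrow> y \<in> DD \<Longrightarrow> x * y = 0 \<Longrightarrow> x = 0 \<or> y = 0"
  unfolding is_domain_at_def by blast

lemma cancel:
  assumes "is_domain_at e" "a \<in> DD" "a \<noteq> 0" "y \<in> DD" "z \<in> DD" "a * y = a * z"
  shows "y = z"
proof -
  have "a * (y - z) = 0" using assms(6) by (simp add: right_diff_distrib)
  then have "y - z = 0" using dom0[OF assms(1,2), of "y - z"] assms by blast
  then show ?thesis by simp
qed

lemma ideal_ext: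
  assumes Pi: "ideal_in DD P" and x: "x \<in> DD"
  shows "ideal_in DD {p + x * d | p d. p \<in> P \<and> d \<in> DD}" (is "ideal_in DD ?J")
    and "P \<subseteq> {p + x * d | p d. p \<in> P \<and> d \<in> DD}"
    and "x \<in> {p + x * d | p d. p \<in> P \<and> d \<in> DD}"
proof -
  show "ideal_in DD ?J"
  proof (rule ideal_inI)
    show "?J \<subseteq> DD"
    proof
      fix z assume "z \<in> ?J"
      then obtain p d where "z = p + x * d" "p \<in> P" by blast
      then show "z \<in> DD" using ideal_inD(1)[OF Pi] x by (simp add: Dadd Dmult1 subset_iff)
    qed
    have "(0::'a) = 0 + x * 0" by simp
    then show "0 \<in> ?J" using ideal_inD(2)[OF Pi] D0 by blast
    show "a + b \<in> ?J" if ab: "a \<in> ?J" "b \<in> ?J" for a b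
    proof -
      obtain p d p' d' where "a = p + x * d" "b = p' + x * d'" "p \<in> P" "d \<in> DD" "p' \<in> P" "d' \<in> DD"
        using ab by blast
      then have "a + b = (p+p') + x*(d+d')" "p + p' \<in> P" "d + d' \<in> DD"
        using ideal_inD(3)[OF Pi] by (auto simp: algebra_simps)
      then show ?thesis by blast
    qed
    show "r * a \<in> ?J" if ab: "a \<in> ?J" for a r
    proof -
      obtain p d where "a = p + x * d" "p \<in> P" "d \<in> DD" using ab by blast
      then have "r * a = (r*p) + x*(r*d)" "r*p \<in> P" "r*d \<in> DD"
        using ideal_inD(4)[OF Pi] by (auto simp: algebra_simps)
      then show ?thesis by blast
    qed
  qed
  show "P \<subseteq> ?J"
  proof
    fix z assume "z \<in> P"
    moreover have "z = z + x * 0" by simp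
    ultimately show "z \<in> ?J" using D0 by blast
  qed
  have "x = 0 + x * e" using x Dmult_e by simp
  then show "x \<in> ?J" using ideal_inD(2)[OF Pi] De by blast
qed

definition prodsub :: "'a set list \<Rightarrow> 'a set \<Rightarrow> bool" where
  "prodsub Ps A \<longleftrightarrow> (\<forall>xs. list_all2 (\<in>) xs Ps \<longrightarrow> e * prod_list xs \<in> A)"

lemma eprod_append: "e * prod_list (us @ vs) = (e * prod_list us) * (e * prod_list vs)"
proof -
  have "e * prod_list (us @ vs) = (e * e) * (prod_list us * prod_list vs)" by (simp add: idem)
  then show ?thesis by (simp add: algebra_simps)
qed

lemma eprod_D: "e * prod_list xs \<in> DD" by (rule Dmult1) simp

lemma L1:
  assumes DK: "dedekind_at e" and A: "ideal_in DD A" "A \<noteq> {0}"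
  shows "\<exists>Ps. (\<forall>Q\<in>set Ps. maximal_ideal_in DD Q) \<and> prodsub Ps A"
proof (rule ccontr)
  assume H: "\<not> ?thesis"
  have N: "noetherian_at e" using DK by (simp add: dedekind_at_def)
  let ?S = "{A. ideal_in DD A \<and> A \<noteq> {0} \<and> \<not> (\<exists>Ps. (\<forall>Q\<in>set Ps. maximal_ideal_in DD Q) \<and> prodsub Ps A)}"
  have AS: "A \<in> ?S" using A H by blast
  obtain M where M: "M \<in> ?S" and Mmax: "\<And>X. X \<in> ?S \<Longrightarrow> M \<subseteq> X \<Longrightarrow> X = M"
    by (rule noeth_maxE[OF N AS]) blast+
  have Mi: "ideal_in DD M" and M0: "M \<noteq> {0}"
    and Mg: "\<And>Ps. (\<forall>Q\<in>set Ps. maximal_ideal_in DD Q) \<Longrightarrow> \<not> prodsub Ps M" using M by auto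
  have MD: "M \<noteq> DD"
  proof
    assume "M = DD"
    have "prodsub [] M" unfolding prodsub_def \<open>M = DD\<close> by simp
    then show False using Mg[of "[]"] by simp
  qed
  have "\<not> prime_ideal_in DD M"
  proof
    assume pr: "prime_ideal_in DD M"
    then have mm: "maximal_ideal_in DD M" using DK M0 by (simp add: dedekind_at_def)
    have "prodsub [M] M" unfolding prodsub_def
    proof (intro allI impI)
      fix xs assume "list_all2 (\<in>) xs [M]"
      then obtain x where "xs = [x]" "x \<in> M" by (cases xs) auto
      then show "e * prod_list xs \<in> M" using ideal_inD(4)[OF Mi] by simp
    qed
    then show False using Mg[of "[M]"] mm by simp
  qed
  then obtain x y where xy: "x \<in> DD" "y \<in> DD" "x * y \<in> M" "x \<notin> M" "y \<notin> M"
    using Mi MD unfolding prime_ideal_in_def by blast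
  have ext: "\<exists>Ps. (\<forall>Q\<in>set Ps. maximal_ideal_in DD Q) \<and> prodsub Ps {p + z * d | p d. p \<in> M \<and> d \<in> DD}"
    if z: "z \<in> DD" "z \<notin> M" for z
  proof (rule ccontr)
    assume nz: "\<not> ?thesis"
    let ?Mz = "{p + z * d | p d. p \<in> M \<and> d \<in> DD}"
    note E = ideal_ext[OF Mi z(1)]
    have "?Mz \<noteq> {0}" using E(2) M0 ideal_inD(2)[OF Mi] by blast
    then have "?Mz \<in> ?S" using E(1) nz by blast
    then have "?Mz = M" using Mmax E(2) by blast
    then show False using E(3) z(2) by blast
  qed
  obtain Ps1 where P1: "\<forall>Q\<in>set Ps1. maximal_ideal_in DD Q" "prodsub Ps1 {p + x * d | p d. p \<in> M \<and> d \<in> DD}"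
    using ext[OF xy(1,4)] by blast
  obtain Ps2 where P2: "\<forall>Q\<in>set Ps2. maximal_ideal_in DD Q" "prodsub Ps2 {p + y * d | p d. p \<in> M \<and> d \<in> DD}"
    using ext[OF xy(2,5)] by blast
  have "prodsub (Ps1 @ Ps2) M" unfolding prodsub_def
  proof (intro allI impI)
    fix xs assume "list_all2 (\<in>) xs (Ps1 @ Ps2)"
    then obtain us vs where uv: "xs = us @ vs" "list_all2 (\<in>) us Ps1" "list_all2 (\<in>) vs Ps2"
      by (auto simp: list_all2_append2)
    obtain p1 d1 where 1: "e * prod_list us = p1 + x * d1" "p1 \<in> M" "d1 \<in> DD"
      using P1(2) uv(2) unfolding prodsub_def by blast
    obtain p2 d2 where 2: "e * prod_list vs = p2 + y * d2" "p2 \<in> M" "d2 \<in> DD"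
      using P2(2) uv(3) unfolding prodsub_def by blast
    have "e * prod_list xs = p1 * (p2 + y * d2) + p2 * (x * d1) + (x * y) * (d1 * d2)"
      unfolding uv(1) eprod_append 1(1) 2(1) by (simp add: algebra_simps)
    moreover have "p1 * (p2 + y * d2) \<in> M" "p2 * (x * d1) \<in> M" "(x * y) * (d1 * d2) \<in> M"
      using ideal_inD(5)[OF Mi] 1(2) 2(2) xy(3) by auto
    ultimately show "e * prod_list xs \<in> M" using ideal_inD(3)[OF Mi] by simp
  qed
  then show False using Mg[of "Ps1 @ Ps2"] P1(1) P2(1) by auto
qed

lemma choice_list2: "\<forall>Q\<in>set Ps. \<exists>x. R x Q \<Longrightarrow> \<exists>xs. list_all2 R xs Ps"
proof (induction Ps)
  case Nil then show ?case by simp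
next
  case (Cons Q Ps)
  then obtain xs x where "list_all2 R xs Ps" "R x Q" by auto
  then have "list_all2 R (x # xs) (Q # Ps)" by simp
  then show ?case by blast
qed

lemma primelist:
  assumes P: "maximal_ideal_in DD P"
  shows "list_all2 (\<lambda>x Q. x \<in> DD \<and> x \<notin> P) xs Ps \<Longrightarrow> e * prod_list xs \<notin> P"
proof (induction xs Ps rule: list_all2_induct)
  case Nil
  have Pi: "ideal_in DD P" "P \<noteq> DD" using P by (auto simp: maximal_ideal_in_def)
  show ?case using ideal_e[OF Pi(1)] Pi(2) by auto
next
  case (Cons x xs Q Qs)
  have eq: "e * prod_list (x # xs) = x * (e * prod_list xs)" by (simp add: algebra_simps)
  show ?case
  proof
    assume "e * prod_list (x # xs) \<in> P"
    then have "x * (e * prod_list xs) \<in> P" by (simp only: eq)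
    then have "x \<in> P \<or> e * prod_list xs \<in> P" using max_prime[OF P] Cons(1) eprod_D by blast
    then show False using Cons by blast
  qed
qed

lemma L2:
  assumes DK: "dedekind_at e" and P: "maximal_ideal_in DD P" and a: "a \<in> P" "a \<noteq> 0"
  shows "\<exists>b\<in>DD. b \<notin> pr a \<and> (\<forall>p\<in>P. b * p \<in> pr a)"
proof -
  have Pi: "ideal_in DD P" "P \<noteq> DD" using P by (auto simp: maximal_ideal_in_def)
  have aD: "a \<in> DD" using a(1) ideal_inD(1)[OF Pi(1)] by blast
  have pai: "ideal_in DD (pr a)" using pr_ideal[OF aD] .
  have "pr a \<noteq> {0}" using pr_self[OF aD] a(2) by blast
  define good where "good Ps \<longleftrightarrow> (\<forall>Q\<in>set Ps. maximal_ideal_in DD Q) \<and> prodsub Ps (pr a)" for Ps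
  have ex: "\<exists>Ps. good Ps" using L1[OF DK pai \<open>pr a \<noteq> {0}\<close>] good_def by blast
  define n0 where "n0 = (LEAST n. \<exists>Ps. good Ps \<and> length Ps = n)"
  have "\<exists>Ps. good Ps \<and> length Ps = n0" unfolding n0_def
    by (rule LeastI_ex) (use ex in blast)
  then obtain Ps0 where Ps0: "good Ps0" "length Ps0 = n0" by blast
  have minl: "\<And>Ps. good Ps \<Longrightarrow> n0 \<le> length Ps" unfolding n0_def by (rule Least_le) blast
  have paP: "pr a \<subseteq> P" unfolding pr_def using ideal_inD(5)[OF Pi(1) a(1)] by blast
  have "\<exists>Q\<in>set Ps0. Q \<subseteq> P"
  proof (rule ccontr)
    assume "\<not> ?thesis"
    then have "\<forall>Q\<in>set Ps0. \<exists>x. x \<in> Q \<and> x \<notin> P" by (meson subsetI)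
    then obtain xs where xs: "list_all2 (\<lambda>x Q. x \<in> Q \<and> x \<notin> P) xs Ps0"
      using choice_list2[of Ps0 "\<lambda>x Q. x \<in> Q \<and> x \<notin> P"] by blast
    have "list_all2 (\<in>) xs Ps0" using xs by (rule list_all2_mono) simp
    then have "e * prod_list xs \<in> P" using Ps0(1) paP unfolding good_def prodsub_def by blast
    moreover have "list_all2 (\<lambda>x Q. x \<in> DD \<and> x \<notin> P) xs Ps0"
    proof -
      have "\<forall>Q\<in>set Ps0. Q \<subseteq> DD" using Ps0(1) unfolding good_def maximal_ideal_in_def
        using ideal_inD(1) by blast
      then have sub: "\<And>i. i < length Ps0 \<Longrightarrow> Ps0 ! i \<subseteq> DD" by (simp add: nth_mem)
      have L: "length xs = length Ps0" "\<And>i. i < length xs \<Longrightarrow> xs!i \<in> Ps0!i \<and> xs!i \<notin> P"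
        using xs by (auto simp: list_all2_conv_all_nth)
      show ?thesis unfolding list_all2_conv_all_nth using L sub by auto
    qed
    ultimately show False using primelist[OF P] by blast
  qed
  then obtain Q where Q: "Q \<in> set Ps0" "Q \<subseteq> P" by blast
  have "maximal_ideal_in DD Q" using Q(1) Ps0(1) good_def by blast
  then have "P = Q" using Q(2) Pi unfolding maximal_ideal_in_def by blast
  then obtain ys zs where yz: "Ps0 = ys @ P # zs" using Q(1) by (meson in_set_conv_decomp)
  have "\<not> good (ys @ zs)"
  proof
    assume "good (ys @ zs)"
    then have "n0 \<le> length (ys @ zs)" by (rule minl)
    then show False using Ps0(2) yz by simp
  qed
  moreover have "\<forall>Q\<in>set (ys @ zs). maximal_ideal_in DD Q" using Ps0(1) yz unfolding good_def by auto
  ultimately have "\<not> prodsub (ys @ zs) (pr a)" unfolding good_def by blast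
  then obtain xs where xs: "list_all2 (\<in>) xs (ys @ zs)" "e * prod_list xs \<notin> pr a"
    unfolding prodsub_def by blast
  then obtain us vs where uv: "xs = us @ vs" "list_all2 (\<in>) us ys" "list_all2 (\<in>) vs zs"
    by (auto simp: list_all2_append2)
  show ?thesis
  proof (intro bexI conjI ballI)
    show "e * prod_list xs \<in> DD" by (rule eprod_D)
    show "e * prod_list xs \<notin> pr a" by (rule xs(2))
    fix p assume p: "p \<in> P"
    have "list_all2 (\<in>) (us @ p # vs) Ps0" unfolding yz using uv p
      by (intro list_all2_appendI) auto
    then have "e * prod_list (us @ p # vs) \<in> pr a" using Ps0(1) unfolding good_def prodsub_def by blast
    moreover have "e * prod_list (us @ p # vs) = e * prod_list xs * p" unfolding uv(1)
      by (simp add: algebra_simps)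
    ultimately show "e * prod_list xs * p \<in> pr a" by simp
  qed
qed

end



context fr
begin

lemma INT:
  assumes DK: "dedekind_at e" and I: "ideal_in DD I" and c: "c \<in> I" "c \<noteq> 0"
    and a: "a \<in> DD" "a \<noteq> 0" and b: "b \<in> DD" and H: "\<And>x. x \<in> I \<Longrightarrow> \<exists>y\<in>I. b * x = a * y"
  shows "b \<in> pr a"
proof -
  have N: "noetherian_at e" and dom: "is_domain_at e" and ic: "integrally_closed_at e"
    using DK by (auto simp: dedekind_at_def)
  have ID: "I \<subseteq> DD" using ideal_inD(1)[OF I] .
  define nxt where "nxt x = (SOME y. y \<in> I \<and> b * x = a * y)" for x
  have nxt: "nxt x \<in> I \<and> b * x = a * nxt x" if "x \<in> I" for x
    unfolding nxt_def by (rule someI_ex) (use H[OF that] in blast)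
  define p where "p j = (nxt ^^ j) c" for j
  have pS: "p (Suc j) = nxt (p j)" for j by (simp add: p_def)
  have pI: "p j \<in> I" for j
    by (induction j) (auto simp: p_def c nxt)
  have pD: "p j \<in> DD" for j using pI ID by blast
  have pb: "b * p j = a * p (Suc j)" for j using nxt[OF pI[of j]] pS by simp
  have pow: "a ^ j * p j = b ^ j * c" for j
  proof (induction j)
    case 0 then show ?case by (simp add: p_def)
  next
    case (Suc j)
    have "a ^ Suc j * p (Suc j) = a ^ j * (a * p (Suc j))" by (simp add: algebra_simps)
    also have "\<dots> = a ^ j * (b * p j)" using pb[of j] by simp
    also have "\<dots> = b * (a ^ j * p j)" by (simp add: mult.left_commute)
    also have "\<dots> = b ^ Suc j * c" using Suc by simp
    finally show ?case .
  qed
  define L where "L k = {x. \<exists>d. (\<forall>j. d j \<in> DD) \<and> x = (\<Sum>j\<le>k. d j * p j)}" for k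
  have Li: "ideal_in DD (L k)" for k
  proof (rule ideal_inI)
    show "L k \<subseteq> DD" unfolding L_def using pD by (auto intro!: Dsum)
    show "0 \<in> L k" unfolding L_def by (rule CollectI, rule exI[of _ "\<lambda>j. 0"]) simp
    show "x + y \<in> L k" if xy: "x \<in> L k" "y \<in> L k" for x y
    proof -
      obtain d d' where d: "\<forall>j. d j \<in> DD" "x = (\<Sum>j\<le>k. d j * p j)" "\<forall>j. d' j \<in> DD" "y = (\<Sum>j\<le>k. d' j * p j)"
        using xy unfolding L_def by blast
      then have "x + y = (\<Sum>j\<le>k. (d j + d' j) * p j)" by (simp add: sum.distrib distrib_right)
      moreover have "\<forall>j. d j + d' j \<in> DD" using d by auto
      ultimately show ?thesis unfolding L_def by (intro CollectI exI[of _ "\<lambda>j. d j + d' j"]) simp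
    qed
    show "r * x \<in> L k" if xy: "x \<in> L k" for x r
    proof -
      obtain d where d: "\<forall>j. d j \<in> DD" "x = (\<Sum>j\<le>k. d j * p j)"
        using xy unfolding L_def by blast
      then have "r * x = (\<Sum>j\<le>k. (r * d j) * p j)" by (simp add: sum_distrib_left mult.assoc)
      moreover have "\<forall>j. r * d j \<in> DD" using d by auto
      ultimately show ?thesis unfolding L_def by (intro CollectI exI[of _ "\<lambda>j. r * d j"]) simp
    qed
  qed
  obtain LN where LN: "LN \<in> range L" "\<And>X. X \<in> range L \<Longrightarrow> LN \<subseteq> X \<Longrightarrow> X = LN"
  proof (rule noeth_maxE[OF N rangeI[of L 0]])
    show "\<And>I. I \<in> range L \<Longrightarrow> ideal_in DD I" using Li by auto
  qed blast
  then obtain N where LN': "LN = L N" by blast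
  have "L N \<subseteq> L (Suc N)"
  proof
    fix x assume "x \<in> L N"
    then obtain d where d: "\<forall>j. d j \<in> DD" "x = (\<Sum>j\<le>N. d j * p j)" unfolding L_def by blast
    define d' where "d' j = (if j \<le> N then d j else 0)" for j
    have "x = (\<Sum>j\<le>Suc N. d' j * p j)" using d by (simp add: d'_def)
    moreover have "\<forall>j. d' j \<in> DD" using d by (simp add: d'_def)
    ultimately show "x \<in> L (Suc N)" unfolding L_def by (intro CollectI exI[of _ d']) simp
  qed
  then have LSN: "L (Suc N) = L N" using LN LN' by blast
  have "p (Suc N) \<in> L (Suc N)"
  proof -
    define d where "d j = (if j = Suc N then e else 0)" for j
    have "(\<Sum>j\<le>Suc N. d j * p j) = e * p (Suc N)" by (simp add: d_def)
    also have "\<dots> = p (Suc N)" using pD De_mult by simp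
    finally have "p (Suc N) = (\<Sum>j\<le>Suc N. d j * p j)" by simp
    moreover have "\<forall>j. d j \<in> DD" by (simp add: d_def)
    ultimately show ?thesis unfolding L_def by (intro CollectI exI[of _ d] conjI) assumption+
  qed
  then have "p (Suc N) \<in> L N" using LSN by simp
  then have "\<exists>d. (\<forall>j. d j \<in> DD) \<and> p (Suc N) = (\<Sum>j\<le>N. d j * p j)" unfolding L_def by (rule CollectD)
  then obtain d where d: "\<forall>j. d j \<in> DD" "p (Suc N) = (\<Sum>j\<le>N. d j * p j)" by (elim exE conjE)
  define n where "n = Suc N"
  have "b ^ n * c = a ^ n * p n" using pow[of n] by simp
  also have "\<dots> = (\<Sum>j\<le>N. d j * (a ^ n * p j))" unfolding n_def d(2) sum_distrib_left
    by (simp add: algebra_simps)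
  also have "\<dots> = (\<Sum>j\<le>N. d j * a ^ (n - j) * b ^ j * c)"
  proof (rule sum.cong[OF refl])
    fix j assume "j \<in> {..N}"
    then have "a ^ n = a ^ (n - j) * a ^ j" unfolding n_def by (simp add: power_add[symmetric])
    then have "a ^ n * p j = a ^ (n - j) * (b ^ j * c)" using pow[of j] by (simp add: mult.assoc)
    then show "d j * (a ^ n * p j) = d j * a ^ (n - j) * b ^ j * c" by (simp add: algebra_simps)
  qed
  finally have "c * (b ^ n - (\<Sum>j\<le>N. d j * a ^ (n - j) * b ^ j)) = 0"
    by (simp add: algebra_simps sum_distrib_left sum_distrib_right)
  moreover have "b ^ n - (\<Sum>j\<le>N. d j * a ^ (n - j) * b ^ j) \<in> DD"
    using b d(1) unfolding n_def by (intro Ddiff Dpow Dsum) auto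
  moreover have "c \<in> DD" using c ID by blast
  ultimately have T: "b ^ n = (\<Sum>j\<le>N. d j * a ^ (n - j) * b ^ j)"
    using dom0[OF dom] c(2) by fastforce
  have reidx: "(\<Sum>j\<in>{1..n}. d (n - j) * b ^ (n - j) * a ^ j) = (\<Sum>j\<le>N. d j * a ^ (n - j) * b ^ j)"
  proof (rule sum.reindex_bij_witness[of _ "\<lambda>i. n - i" "\<lambda>j. n - j"])
    show "\<And>i. i \<in> {1..n} \<Longrightarrow> n - (n - i) = i" by auto
    show "\<And>i. i \<in> {1..n} \<Longrightarrow> n - i \<in> {..N}" unfolding n_def by auto
    show "\<And>i. i \<in> {..N} \<Longrightarrow> n - (n - i) = i" unfolding n_def by auto
    show "\<And>i. i \<in> {..N} \<Longrightarrow> n - i \<in> {1..n}" unfolding n_def by auto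
    show "\<And>i. i \<in> {1..n} \<Longrightarrow> d (n - i) * a ^ (n - (n - i)) * b ^ (n - i) = d (n - i) * b ^ (n - i) * a ^ i"
      by (simp add: algebra_simps)
  qed
  define cc where "cc j = - d (n - j)" for j
  have "\<forall>j. cc j \<in> DD" using d(1) by (simp add: cc_def Dminus)
  moreover have "b ^ n + (\<Sum>j\<in>{1..n}. cc j * b ^ (n - j) * a ^ j) = 0"
    unfolding cc_def using T reidx by (simp add: sum_negf)
  moreover have "n > 0" by (simp add: n_def)
  ultimately obtain dd where "dd \<in> DD" "b = dd * a"
    using ic b a unfolding integrally_closed_at_def by blast
  then show ?thesis unfolding pr_def by (auto simp: mult.commute)
qed

end



context fr
begin

definition Inv :: "'a set \<Rightarrow> bool" where
  "Inv I \<longleftrightarrow> (\<exists>a\<in>DD. a \<noteq> 0 \<and> (\<exists>J. ideal_in DD J \<and> (\<forall>u\<in>I. \<forall>v\<in>J. u * v \<in> pr a) \<and> a \<in> idprod I J))"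


lemma L4:
  assumes DK: "dedekind_at e" and I: "ideal_in DD I" "I \<noteq> {0}"
  shows "Inv I"
proof (rule ccontr)
  assume nI: "\<not> Inv I"
  have N: "noetherian_at e" and dom: "is_domain_at e"
    using DK by (auto simp: dedekind_at_def)
  have e0: "e \<noteq> 0" using dom by (simp add: is_domain_at_def)
  let ?S = "{I. ideal_in DD I \<and> I \<noteq> {0} \<and> \<not> Inv I}"
  have IS: "I \<in> ?S" using I nI by blast
  obtain M where M: "M \<in> ?S" and Mmax: "\<And>X. X \<in> ?S \<Longrightarrow> M \<subseteq> X \<Longrightarrow> X = M"
    by (rule noeth_maxE[OF N IS]) blast+
  have Mi: "ideal_in DD M" and M0: "M \<noteq> {0}" and nM: "\<not> Inv M" using M by auto
  have "Inv DD" unfolding Inv_def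
  proof (intro bexI conjI exI ballI)
    show "e \<noteq> 0" by (rule e0)
    show "ideal_in DD DD" by (rule ideal_D)
    show "u * v \<in> pr e" if "u \<in> DD" "v \<in> DD" for u v
      using pr_mult[OF De, of "u * v"] De_mult[OF Dmult1[OF that(1), of v]] by simp
    show "e \<in> idprod DD DD" using idprod_single[OF De De] idem by simp
  qed simp
  then have MD: "M \<noteq> DD" using nM by blast
  obtain P where P: "maximal_ideal_in DD P" "M \<subseteq> P" using max_ideal_exists[OF N Mi MD] by blast
  have Pi: "ideal_in DD P" using P(1) by (simp add: maximal_ideal_in_def)
  obtain a where a: "a \<in> M" "a \<noteq> 0" using M0 ideal_inD(2)[OF Mi] by blast
  have aD: "a \<in> DD" using a(1) ideal_inD(1)[OF Mi] by blast
  obtain b where b: "b \<in> DD" "b \<notin> pr a" "\<And>p. p \<in> P \<Longrightarrow> b * p \<in> pr a"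
    using L2[OF DK P(1) _ a(2)] a(1) P(2) by blast
  define Q where "Q = {y \<in> DD. \<forall>p\<in>P. y * p \<in> pr a}"
  have pai: "ideal_in DD (pr a)" by (rule pr_ideal[OF aD])
  have Qi: "ideal_in DD Q"
  proof (rule ideal_inI)
    show "Q \<subseteq> DD" unfolding Q_def by blast
    show "0 \<in> Q" unfolding Q_def using ideal_inD(2)[OF pai] by simp
    show "x + y \<in> Q" if "x \<in> Q" "y \<in> Q" for x y
      using that ideal_inD(3)[OF pai] unfolding Q_def by (auto simp: distrib_right)
    show "r * x \<in> Q" if "x \<in> Q" for x r
      using that ideal_inD(4)[OF pai] unfolding Q_def by (auto simp: mult.assoc)
  qed
  have aQ: "a \<in> Q" unfolding Q_def using aD pr_mult[OF aD] by blast
  have bQ: "b \<in> Q" unfolding Q_def using b by blast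
  define I2 where "I2 = {y \<in> DD. a * y \<in> idprod M Q}"
  have I2i: "ideal_in DD I2"
  proof (rule ideal_inI)
    show "I2 \<subseteq> DD" unfolding I2_def by blast
    show "0 \<in> I2" unfolding I2_def by (simp add: idprod.ip0)
    show "x + y \<in> I2" if "x \<in> I2" "y \<in> I2" for x y
      using that idprod_add unfolding I2_def by (auto simp: distrib_left)
    show "r * x \<in> I2" if "x \<in> I2" for x r
    proof -
      have eq: "a * (r * x) = r * (a * x)" by (simp add: mult.left_commute)
      have xx: "x \<in> DD" "a * x \<in> idprod M Q" using that unfolding I2_def by auto
      have "r * (a * x) \<in> idprod M Q" using idprod_mult[OF xx(2) Mi] .
      then have "a * (r * x) \<in> idprod M Q" by (simp only: eq)
      moreover have "r * x \<in> DD" using xx(1) by blast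
      ultimately show ?thesis unfolding I2_def by blast
    qed
  qed
  have MI2: "M \<subseteq> I2"
  proof
    fix x assume x: "x \<in> M"
    have "a * x \<in> idprod M Q" using idprod_single[OF x aQ] by (simp add: mult.commute)
    then show "x \<in> I2" unfolding I2_def using x ideal_inD(1)[OF Mi] by auto
  qed
  have "I2 \<noteq> M"
  proof
    assume eq: "I2 = M"
    have "\<exists>y\<in>M. b * x = a * y" if x: "x \<in> M" for x
    proof -
      have "b * x \<in> pr a" using b(3) x P(2) by blast
      then obtain y where y: "y \<in> DD" "b * x = a * y" by (rule prE)
      have "a * y \<in> idprod M Q" using y(2) idprod_single[OF x bQ] by (simp add: mult.commute)
      then have "y \<in> M" using y(1) eq unfolding I2_def by blast
      then show ?thesis using y(2) by blast
    qed
    then have "b \<in> pr a" using INT[OF DK Mi a aD a(2) b(1)] by blast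
    then show False using b(2) by blast
  qed
  moreover have "I2 \<noteq> {0}" using MI2 a by blast
  ultimately have "Inv I2" using Mmax[of I2] MI2 I2i by blast
  then obtain c J where c: "c \<in> DD" "c \<noteq> 0" "ideal_in DD J" "\<And>u v. u \<in> I2 \<Longrightarrow> v \<in> J \<Longrightarrow> u * v \<in> pr c"
    "c \<in> idprod I2 J" unfolding Inv_def by blast
  have acD: "a * c \<in> DD" using aD by blast
  have pac: "ideal_in DD (pr (a * c))" by (rule pr_ideal[OF acD])
  have "Inv M" unfolding Inv_def
  proof (intro bexI conjI exI ballI)
    show "a * c \<in> DD" by (rule acD)
    show "a * c \<noteq> 0" using dom0[OF dom aD c(1)] a(2) c(2) by blast
    show "ideal_in DD (idprod Q J)" by (rule idprod_ideal[OF Qi])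
    show "u * w \<in> pr (a * c)" if u: "u \<in> M" and w: "w \<in> idprod Q J" for u w
      using w
    proof (induction w rule: idprod.induct)
      case ip0 then show ?case using ideal_inD(2)[OF pac] by simp
    next
      case (ipS q v w)
      have "q * u \<in> pr a" using ipS(1) u P(2) unfolding Q_def by blast
      then obtain y where y: "y \<in> DD" "q * u = a * y" by (rule prE)
      have "a * y \<in> idprod M Q" using idprod_single[OF u ipS(1)] y(2) by (simp add: mult.commute)
      then have "y \<in> I2" unfolding I2_def using y(1) by blast
      then have "y * v \<in> pr c" using c(4) ipS(2) by blast
      then obtain s where s: "s \<in> DD" "y * v = c * s" by (rule prE)
      have "u * (q * v + w) = (a * c) * s + u * w"
        using y(2) s(2) by (simp add: algebra_simps) (metis mult.commute mult.left_commute)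
      moreover have "(a * c) * s \<in> pr (a * c)" by (rule pr_mult[OF acD])
      ultimately show ?case using ipS(4) ideal_inD(3)[OF pac] by simp
    qed
    have sub: "s * v \<in> idprod M (idprod Q J)" if s: "s \<in> idprod M Q" and v: "v \<in> J" for s v
      using s
    proof (induction s rule: idprod.induct)
      case ip0 then show ?case by (simp add: idprod.ip0)
    next
      case (ipS u q s)
      have "(u * q + s) * v = u * (q * v) + s * v" by (simp add: algebra_simps)
      moreover have "q * v \<in> idprod Q J" by (rule idprod_single[OF ipS(2) v])
      ultimately show ?case using idprod.ipS[OF ipS(1) _ ipS(4)] by simp
    qed
    have "a * t \<in> idprod M (idprod Q J)" if t: "t \<in> idprod I2 J" for t
      using t
    proof (induction t rule: idprod.induct)
      case ip0 then show ?case by (simp add: idprod.ip0)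
    next
      case (ipS y v t)
      have "a * (y * v + t) = (a * y) * v + a * t" by (simp add: algebra_simps)
      moreover have "a * y \<in> idprod M Q" using ipS(1) unfolding I2_def by blast
      moreover have "a * y * v \<in> idprod M (idprod Q J)" using sub[OF calculation(2) ipS(2)] .
      ultimately show ?case using idprod_add[OF _ ipS(4)] by simp
    qed
    then show "a * c \<in> idprod M (idprod Q J)" using c(5) by blast
  qed
  then show False using nM by blast
qed

end



context fr
begin

definition MXprop :: "'a set \<Rightarrow> bool" where
  "MXprop X \<longleftrightarrow> (\<forall>J. ideal_in DD J \<and> J \<subseteq> X \<longrightarrow> J \<subseteq> idprod {k\<in>DD. \<forall>x\<in>X. k * x \<in> J} X)"

lemma MX_D: "MXprop DD"
  unfolding MXprop_def
proof (intro allI impI subsetI)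
  fix J y assume J: "ideal_in DD J \<and> J \<subseteq> DD" and y: "y \<in> J"
  have yD: "y \<in> DD" using J y by blast
  have "y \<in> {k\<in>DD. \<forall>x\<in>DD. k * x \<in> J}" using yD y ideal_inD(5)[of J] J by blast
  then have "y * e \<in> idprod {k\<in>DD. \<forall>x\<in>DD. k * x \<in> J} DD" by (rule idprod_single) simp
  then show "y \<in> idprod {k\<in>DD. \<forall>x\<in>DD. k * x \<in> J} DD" using Dmult_e[OF yD] by simp
qed

lemma MX_ded:
  assumes DK: "dedekind_at e" and X: "ideal_in DD X" "X \<noteq> {0}"
  shows "MXprop X"
  unfolding MXprop_def
proof (intro allI impI subsetI)
  fix J y assume J: "ideal_in DD J \<and> J \<subseteq> X" and y: "y \<in> J"
  have dom: "is_domain_at e" using DK by (simp add: dedekind_at_def)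
  have XD: "X \<subseteq> DD" using ideal_inD(1)[OF X(1)] .
  have yX: "y \<in> X" using J y by blast
  have yD: "y \<in> DD" using yX XD by blast
  let ?K = "{k\<in>DD. \<forall>x\<in>X. k * x \<in> J}"
  obtain a J' where a: "a \<in> DD" "a \<noteq> 0" "ideal_in DD J'" "\<And>u v. u \<in> X \<Longrightarrow> v \<in> J' \<Longrightarrow> u * v \<in> pr a"
    "a \<in> idprod X J'"
    using L4[OF DK X] unfolding Inv_def by blast
  have claim: "\<exists>z\<in>idprod ?K X. y * t = a * z" if t: "t \<in> idprod X J'" for t
    using t
  proof (induction t rule: idprod.induct)
    case ip0
    have "y * 0 = a * 0" by simp
    then show ?case using idprod.ip0[of ?K X] by blast
  next
    case (ipS u v t)
    then obtain z where z: "z \<in> idprod ?K X" "y * t = a * z" by blast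
    have "y * v \<in> pr a" using a(4)[OF yX ipS(2)] .
    then obtain k where k: "k \<in> DD" "y * v = a * k" by (rule prE)
    have "k \<in> ?K"
    proof (intro CollectI conjI ballI)
      show "k \<in> DD" by (rule k(1))
      fix x assume x: "x \<in> X"
      have "x * v \<in> pr a" using a(4)[OF x ipS(2)] .
      then obtain s where s: "s \<in> DD" "x * v = a * s" by (rule prE)
      have "a * (k * x) = (y * v) * x" using k(2) by (simp add: mult.assoc)
      also have "\<dots> = y * (x * v)" by (simp add: algebra_simps)
      also have "\<dots> = a * (y * s)" using s(2) by (simp add: algebra_simps)
      finally have "k * x = y * s" using cancel[OF dom a(1,2)] k(1) yD by blast
      then show "k * x \<in> J" using ideal_inD(4)[of J y s] J y by (simp add: mult.commute)
    qed
    then have "k * u + z \<in> idprod ?K X" using idprod.ipS[OF _ ipS(1) z(1)] by blast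
    moreover have "y * (u * v + t) = a * (k * u + z)"
    proof -
      have "y * (u * v + t) = u * (y * v) + y * t" by (simp add: algebra_simps)
      also have "\<dots> = u * (a * k) + a * z" using k(2) z(2) by simp
      also have "\<dots> = a * (k * u + z)" by (simp add: algebra_simps)
      finally show ?thesis .
    qed
    ultimately show ?case by blast
  qed
  obtain z where z: "z \<in> idprod ?K X" "y * a = a * z" using claim[OF a(5)] by blast
  have "z \<in> DD" using idprod_D[OF z(1)] by blast
  then have "y = z" using cancel[OF dom a(1,2) yD] z(2) by (simp add: mult.commute)
  then show "y \<in> idprod ?K X" using z(1) by simp
qed

lemma pir_noeth: "pir_at e \<Longrightarrow> noetherian_at e"
  unfolding noetherian_at_def
proof (intro allI impI)
  fix I assume pir: "pir_at e" and I: "ideal_in DD I"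
  then obtain a where a: "a \<in> DD" "I = {d * a | d. d \<in> DD}" unfolding pir_at_def by blast
  have "I = ideal_gen_in DD {a}" unfolding a(2) ideal_gen_in_def
  proof (intro set_eqI iffI)
    fix x assume "x \<in> {d * a | d. d \<in> DD}"
    then obtain d where d: "d \<in> DD" "x = d * a" by blast
    then show "x \<in> {x. \<exists>c. (\<forall>f\<in>{a}. c f \<in> DD) \<and> x = (\<Sum>f\<in>{a}. c f * f)}"
      by (intro CollectI exI[of _ "\<lambda>_. d"]) simp
  next
    fix x assume "x \<in> {x. \<exists>c. (\<forall>f\<in>{a}. c f \<in> DD) \<and> x = (\<Sum>f\<in>{a}. c f * f)}"
    then show "x \<in> {d * a | d. d \<in> DD}" by auto
  qed
  moreover have "a \<in> I"
  proof -
    have "a = e * a" using De_mult[OF a(1)] by simp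
    then show ?thesis unfolding a(2) using De by blast
  qed
  ultimately show "\<exists>F. finite F \<and> F \<subseteq> I \<and> I = ideal_gen_in DD F"
    by (intro exI[of _ "{a}"]) simp
qed

lemma local_facts:
  assumes L: "artinian_local_pir_at e"
  shows "e \<noteq> 0" "\<exists>p\<in>DD. \<exists>K. p ^ K = 0 \<and> (\<forall>u\<in>DD. (\<exists>d\<in>DD. u = d * p) \<or> (\<exists>w\<in>DD. w * u = e))"
proof -
  have art: "artinian_at e" and loc: "local_at e" and pir: "pir_at e"
    using L by (auto simp: artinian_local_pir_at_def)
  have N: "noetherian_at e" by (rule pir_noeth[OF pir])
  obtain P where P: "maximal_ideal_in DD P" and Puniq: "\<And>M. maximal_ideal_in DD M \<Longrightarrow> M = P"
    using loc unfolding local_at_def by blast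
  have Pi: "ideal_in DD P" and PD: "P \<noteq> DD" using P by (auto simp: maximal_ideal_in_def)
  show "e \<noteq> 0"
  proof
    assume "e = 0"
    then have "DD = {0}" using memD by auto
    moreover have "P \<subseteq> DD" "0 \<in> P" using ideal_inD(1,2)[OF Pi] by auto
    ultimately have "P = DD" by auto
    then show False using PD by simp
  qed
  obtain p where p: "p \<in> DD" "P = {d * p | d. d \<in> DD}" using pir Pi unfolding pir_at_def by blast
  have unit: "\<exists>w\<in>DD. w * u = e" if u: "u \<in> DD" "u \<notin> P" for u
  proof (rule ccontr)
    assume nu: "\<not> ?thesis"
    have "e \<notin> pr u"
    proof
      assume "e \<in> pr u"
      then obtain w where "w \<in> DD" "e = u * w" by (rule prE)
      then show False using nu by (metis mult.commute)
    qed
    then have "pr u \<noteq> DD" by auto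
    then obtain M where M: "maximal_ideal_in DD M" "pr u \<subseteq> M" using max_ideal_exists[OF N pr_ideal[OF u(1)]] by blast
    then have "u \<in> P" using Puniq[OF M(1)] pr_self[OF u(1)] by blast
    then show False using u(2) by blast
  qed
  have dec: "\<forall>u\<in>DD. (\<exists>d\<in>DD. u = d * p) \<or> (\<exists>w\<in>DD. w * u = e)"
    using unit p(2) by blast
  define f where "f k = pr (p ^ Suc k)" for k
  have pk: "p ^ Suc k \<in> DD" for k using p(1) by blast
  have fi: "ideal_in DD (f k)" for k unfolding f_def by (rule pr_ideal[OF pk])
  have fdec: "f (Suc k) \<subseteq> f k" for k
  proof
    fix x assume "x \<in> f (Suc k)"
    then obtain d where "x = p ^ Suc (Suc k) * d" unfolding f_def by (auto elim: prE)
    then have "x = p ^ Suc k * (p * d)" by (simp add: algebra_simps)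
    then show "x \<in> f k" unfolding f_def using pr_mult[OF pk] by simp
  qed
  obtain N0 where N0: "\<And>k. k \<ge> N0 \<Longrightarrow> f k = f N0"
    using art fi fdec unfolding artinian_at_def by blast
  have "p ^ Suc N0 \<in> f (Suc N0)" using N0[of "Suc N0"] pr_self[OF pk] f_def by simp
  then obtain d where d: "d \<in> DD" "p ^ Suc N0 = p ^ Suc (Suc N0) * d" unfolding f_def by (rule prE)
  have "e - p * d \<notin> P"
  proof
    assume "e - p * d \<in> P"
    moreover have "p * d \<in> P" unfolding p(2) using d(1) by (auto simp: mult.commute)
    ultimately have "(e - p * d) + p * d \<in> P" using ideal_inD(3)[OF Pi] by blast
    then have "e \<in> P" by simp
    then show False using ideal_e[OF Pi] PD by blast
  qed
  moreover have "e - p * d \<in> DD" using Ddiff[OF De Dmult1[OF p(1)]] .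
  ultimately obtain w where w: "w \<in> DD" "w * (e - p * d) = e" using unit by blast
  have "p ^ Suc N0 * (e - p * d) = 0"
    using d(2) Dmult_e[OF pk[of N0]] by (simp add: algebra_simps)
  then have "p ^ Suc N0 * e = 0" using w(2) by (metis mult.left_commute mult_zero_right)
  then have "p ^ Suc N0 = 0" using Dmult_e[OF pk[of N0]] by simp
  then show "\<exists>p\<in>DD. \<exists>K. p ^ K = 0 \<and> (\<forall>u\<in>DD. (\<exists>d\<in>DD. u = d * p) \<or> (\<exists>w\<in>DD. w * u = e))"
    using dec p(1) by blast
qed

end



lemma iso_sym:
  assumes g: "bij_betw g A B" and add: "\<And>x y. x \<in> A \<Longrightarrow> y \<in> A \<Longrightarrow> g (x + y) = g x + g y"
    and sc: "\<And>r x. x \<in> A \<Longrightarrow> g (s1 r x) = s2 r (g x)"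
    and Aadd: "\<And>x y. x \<in> A \<Longrightarrow> y \<in> A \<Longrightarrow> x + y \<in> A"
    and Asc: "\<And>r x. x \<in> A \<Longrightarrow> s1 r x \<in> A"
  shows "module_iso_sets s2 B s1 A"
  unfolding module_iso_sets_def
proof (intro exI conjI ballI allI)
  let ?f = "the_inv_into A g"
  show "bij_betw ?f B A" by (rule bij_betw_the_inv_into[OF g])
  have inj: "inj_on g A" using g by (simp add: bij_betw_def)
  have fB: "\<And>y. y \<in> B \<Longrightarrow> ?f y \<in> A \<and> g (?f y) = y"
    using g by (metis bij_betw_def f_the_inv_into_f the_inv_into_into order_refl)
  fix x y assume x: "x \<in> B" and y: "y \<in> B"
  have "g (?f x + ?f y) = x + y" using add fB x y by simp
  then show "?f (x + y) = ?f x + ?f y"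
    using the_inv_into_f_f[OF inj Aadd[OF fB[OF x, THEN conjunct1] fB[OF y, THEN conjunct1]]] by simp
next
  let ?f = "the_inv_into A g"
  have inj: "inj_on g A" using g by (simp add: bij_betw_def)
  have fB: "\<And>y. y \<in> B \<Longrightarrow> ?f y \<in> A \<and> g (?f y) = y"
    using g by (metis bij_betw_def f_the_inv_into_f the_inv_into_into order_refl)
  fix r x assume x: "x \<in> B"
  have "g (s1 r (?f x)) = s2 r x" using sc fB x by simp
  then show "?f (s2 r x) = s1 r (?f x)"
    using the_inv_into_f_f[OF inj Asc[of "?f x" r, OF fB[OF x, THEN conjunct1]]] by simp
qed

locale mfr = fr e + module scale for e :: "'a::comm_ring_1" and scale :: "'a \<Rightarrow> 'm::ab_group_add \<Rightarrow> 'm"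
begin

abbreviation "Mi \<equiv> range (scale e)"

lemma Mi_iff: "z \<in> Mi \<longleftrightarrow> scale e z = z"
proof
  assume "z \<in> Mi" then obtain w where "z = scale e w" by blast
  then show "scale e z = z" by (simp add: idem)
qed (metis rangeI)

lemma D_scale: "d \<in> DD \<Longrightarrow> scale d m = scale d (scale e m)"
  using Dmult_e[of d] by simp

lemma Mi_add: "z \<in> Mi \<Longrightarrow> z' \<in> Mi \<Longrightarrow> z + z' \<in> Mi"
  by (simp add: Mi_iff scale_right_distrib)
lemma Mi_diff: assumes "z \<in> Mi" "z' \<in> Mi" shows "z - z' \<in> Mi"
proof -
  have "scale e (z - z') = scale e z - scale e z'" by (rule scale_right_diff_distrib)
  then show ?thesis using assms Mi_iff by simp
qed
lemma Mi_scale: assumes "z \<in> Mi" shows "scale c z \<in> Mi"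
proof -
  have ez: "scale e z = z" using assms Mi_iff by blast
  have "scale e (scale c z) = scale c (scale e z)" by (rule scale_left_commute)
  also have "\<dots> = scale c z" by (simp only: ez)
  finally show ?thesis using Mi_iff by blast
qed
lemma Mi_0: "0 \<in> Mi" by (simp add: Mi_iff)
lemma Mi_D: "d \<in> DD \<Longrightarrow> scale d m \<in> Mi"
  by (simp add: Mi_iff De_mult)

lemma kernel_subspace: "subspace {z. scale c z = 0}"
  unfolding subspace_def
proof (intro conjI ballI allI)
  show "0 \<in> {z. scale c z = 0}" by simp
  fix x y assume "x \<in> {z. scale c z = 0}" "y \<in> {z. scale c z = 0}"
  then show "x + y \<in> {z. scale c z = 0}" by (simp add: scale_right_distrib)
next
  fix c' x assume x: "x \<in> {z. scale c z = 0}"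
  have "scale c (scale c' x) = scale c' (scale c x)" by (rule scale_left_commute)
  also have "\<dots> = 0" using x by simp
  finally show "scale c' x \<in> {z. scale c z = 0}" by simp
qed

lemma mult_factor:
  assumes Xi: "ideal_in DD X" and g: "bij_betw g Mi X"
    and gadd: "\<And>x y. x \<in> Mi \<Longrightarrow> y \<in> Mi \<Longrightarrow> g (x + y) = g x + g y"
    and gsc: "\<And>r x. x \<in> Mi \<Longrightarrow> g (scale r x) = r * g x"
    and MX: "MXprop X" and N: "subspace N"
    and z: "z \<in> N" "z \<in> Mi"
  shows "z \<in> span {scale r m | r m. r \<in> {r. \<forall>m. scale r m \<in> N}}"
proof -
  let ?S = "{scale r m | r m. r \<in> {r. \<forall>m. scale r m \<in> N}}"
  have inj: "inj_on g Mi" and gim: "g ` Mi = X" using g by (auto simp: bij_betw_def)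
  have XD: "X \<subseteq> DD" using ideal_inD(1)[OF Xi] .
  have g0: "g 0 = 0" using gadd[OF Mi_0 Mi_0] by simp
  let ?J = "g ` (N \<inter> Mi)"
  have Ji: "ideal_in DD ?J"
  proof (rule ideal_inI)
    show "?J \<subseteq> DD" using gim XD by blast
    show "0 \<in> ?J" using g0 subspace_0[OF N] Mi_0 by force
    show "x + y \<in> ?J" if "x \<in> ?J" "y \<in> ?J" for x y
    proof -
      from that obtain u v where uv: "u \<in> N" "u \<in> Mi" "v \<in> N" "v \<in> Mi" "x = g u" "y = g v" by blast
      then have "x + y = g (u + v)" using gadd by simp
      moreover have "u + v \<in> N \<inter> Mi" using uv subspace_add[OF N] Mi_add by blast
      ultimately show ?thesis by blast
    qed
    show "r * x \<in> ?J" if "x \<in> ?J" for x r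
    proof -
      from that obtain u where u: "u \<in> N" "u \<in> Mi" "x = g u" by blast
      then have "r * x = g (scale r u)" using gsc by simp
      moreover have "scale r u \<in> N \<inter> Mi" using u subspace_scale[OF N] Mi_scale by blast
      ultimately show ?thesis by blast
    qed
  qed
  have JX: "?J \<subseteq> X" using gim by blast
  let ?K = "{k\<in>DD. \<forall>x\<in>X. k * x \<in> ?J}"
  have "g z \<in> idprod ?K X" using MX Ji JX z unfolding MXprop_def by blast
  have KI: "k \<in> {r. \<forall>m. scale r m \<in> N}" if k: "k \<in> ?K" for k
  proof (intro CollectI allI)
    fix m
    have kD: "k \<in> DD" using k by blast
    have "g (scale e m) \<in> X" using gim by blast
    moreover have "\<forall>x\<in>X. k * x \<in> ?J" using k by (simp only: mem_Collect_eq) (rule conjunct2)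
    ultimately have "k * g (scale e m) \<in> ?J" by (rule bspec[rotated])
    then obtain z' where z'0: "z' \<in> N \<inter> Mi" "k * g (scale e m) = g z'" by (rule imageE)
    then have z': "z' \<in> N" "z' \<in> Mi" "g z' = k * g (scale e m)" by auto
    have em: "scale e m \<in> Mi" by (rule rangeI)
    have "g (scale k (scale e m)) = g z'" using gsc[OF em, of k] z'(3)[symmetric] by (rule trans)
    moreover have "scale k (scale e m) \<in> Mi" by (rule Mi_scale[OF em])
    ultimately have "scale k (scale e m) = z'" using inj_onD[OF inj] z'(2) by blast
    then have "scale k m = z'" using D_scale[OF kD, of m] by (rule trans[rotated])
    then show "scale k m \<in> N" using z'(1) by simp
  qed
  have claim: "\<exists>w\<in>Mi. g w = t \<and> w \<in> span ?S" if t: "t \<in> idprod ?K X" for t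
    using t
  proof (induction t rule: idprod.induct)
    case ip0 then show ?case using g0 Mi_0 span_zero by blast
  next
    case (ipS k u t)
    then obtain w where w: "w \<in> Mi" "g w = t" "w \<in> span ?S" by blast
    obtain wu where wu: "wu \<in> Mi" "g wu = u" using ipS(2) gim by blast
    have "scale k wu \<in> ?S" using KI[OF ipS(1)] by blast
    then have "scale k wu + w \<in> span ?S" using span_add[OF span_base w(3)] by blast
    moreover have "g (scale k wu + w) = k * u + t" using gadd[OF Mi_scale[OF wu(1)] w(1)] gsc[OF wu(1)] wu(2) w(2) by simp
    moreover have "scale k wu + w \<in> Mi" using Mi_add[OF Mi_scale[OF wu(1)] w(1)] .
    ultimately show ?case by blast
  qed
  obtain w where w: "w \<in> Mi" "g w = g z" "w \<in> span ?S" using claim[OF \<open>g z \<in> idprod ?K X\<close>] by blast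
  then have "w = z" using inj_onD[OF inj] z(2) by blast
  then show ?thesis using w(3) by simp
qed

lemma faith_factor:
  assumes g: "bij_betw g Mi X"
    and gsc: "\<And>r x. x \<in> Mi \<Longrightarrow> g (scale r x) = r * g x"
    and gadd: "\<And>x y. x \<in> Mi \<Longrightarrow> y \<in> Mi \<Longrightarrow> g (x + y) = g x + g y"
    and X: "X = DD \<or> (is_domain_at e \<and> ideal_in DD X \<and> X \<noteq> {0})"
    and r: "\<And>m. scale r m = 0"
  shows "r * e = 0"
proof -
  have gim: "g ` Mi = X" using g by (auto simp: bij_betw_def)
  have g0: "g 0 = 0" using gadd[OF Mi_0 Mi_0] by simp
  have rx: "r * x = 0" if "x \<in> X" for x
  proof -
    have "x \<in> g ` Mi" using that gim by simp
    then obtain w where w: "w \<in> Mi" "x = g w" by (rule imageE)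
    have "r * x = g (scale r w)" using gsc[OF w(1), of r] w(2) by simp
    also have "\<dots> = 0" using r g0 by simp
    finally show ?thesis .
  qed
  show ?thesis
  proof (cases "X = DD")
    case True then show ?thesis using rx De by simp
  next
    case False
    then have dom: "is_domain_at e" and Xi: "ideal_in DD X" and X0: "X \<noteq> {0}" using X by auto
    obtain x where x: "x \<in> X" "x \<noteq> 0" using X0 ideal_inD(2)[OF Xi] by auto
    have xD: "x \<in> DD" using x(1) ideal_inD(1)[OF Xi] by blast
    have "(r * e) * x = r * x" using De_mult[OF xD] by (simp add: mult.assoc)
    then have "(r * e) * x = 0" using rx[OF x(1)] by simp
    then show ?thesis using dom0[OF dom Dmult2[OF De, of r] xD] x(2) by blast
  qed
qed

end



context mfr
begin

lemma mult_gen: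
  assumes MM: "multiplication_module scale"
  shows "\<exists>I. ideal I \<and> (\<forall>r\<in>I. \<forall>y. \<exists>s. scale r y = scale s m)
     \<and> (\<forall>T. subspace T \<longrightarrow> (\<forall>r\<in>I. \<forall>y. scale r y \<in> T) \<longrightarrow> m \<in> T)"
proof -
  obtain I where I: "ideal I" "span {m} = span {scale r y | r y. r \<in> I}"
    using MM subspace_span[of "{m}"] unfolding multiplication_module_def by blast
  have 1: "\<forall>r\<in>I. \<forall>y. \<exists>s. scale r y = scale s m"
  proof (intro ballI allI)
    fix r y assume "r \<in> I"
    then have "scale r y \<in> span {scale r y | r y. r \<in> I}" by (intro span_base) blast
    then have "scale r y \<in> range (\<lambda>k. scale k m)" using I(2) span_singleton by simp
    then show "\<exists>s. scale r y = scale s m" by blast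
  qed
  have 2: "m \<in> T" if T: "subspace T" "\<forall>r\<in>I. \<forall>y. scale r y \<in> T" for T
  proof -
    have "m \<in> span {m}" by (rule span_base) simp
    then have "m \<in> span {scale r y | r y. r \<in> I}" using I(2) by simp
    moreover have "span {scale r y | r y. r \<in> I} \<subseteq> T" using T by (intro span_minimal) blast+
    ultimately show ?thesis by blast
  qed
  show ?thesis using I(1) 1 2 by blast
qed

lemma F0:
  assumes FM: "faithful_module scale" and d: "d \<in> DD" and z: "\<And>z. z \<in> Mi \<Longrightarrow> scale d z = 0"
  shows "d = 0"
proof -
  have "scale d m0 = 0" for m0 using D_scale[OF d, of m0] z[of "scale e m0"] by simp
  then show ?thesis using FM unfolding faithful_module_def by blast
qed

lemma TF:
  assumes FM: "faithful_module scale" and MM: "multiplication_module scale" and dom: "is_domain_at e"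
    and m: "m \<in> Mi" and x: "x \<in> DD" "x \<noteq> 0" and xm: "scale x m = 0"
  shows "m = 0"
proof -
  obtain I where I: "\<forall>r\<in>I. \<forall>y. \<exists>s. scale r y = scale s m"
     "\<forall>T. subspace T \<longrightarrow> (\<forall>r\<in>I. \<forall>y. scale r y \<in> T) \<longrightarrow> m \<in> T"
    using mult_gen[OF MM, of m] by blast
  have "scale r y \<in> {z. scale e z = 0}" if r: "r \<in> I" for r y
  proof -
    have "scale (x * r) y' = 0" for y'
    proof -
      obtain s where s: "scale r y' = scale s m" using I(1) r by blast
      have "scale (x * r) y' = scale x (scale r y')" by simp
      also have "\<dots> = scale x (scale s m)" by (simp only: s)
      also have "\<dots> = scale s (scale x m)" by (rule scale_left_commute)
      also have "\<dots> = 0" using xm by simp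
      finally show ?thesis .
    qed
    then have "x * r = 0" using FM unfolding faithful_module_def by blast
    then have "x * (e * r) = 0" by (simp add: mult.left_commute)
    then have "e * r = 0" using dom0[OF dom x(1) Dmult1[OF De, of r]] x(2) by blast
    then show ?thesis by simp
  qed
  then have "m \<in> {z. scale e z = 0}" using I(2) kernel_subspace by blast
  then show ?thesis using m Mi_iff by simp
qed

lemma fwd_ded:
  assumes FM: "faithful_module scale" and MM: "multiplication_module scale" and DK: "dedekind_at e"
  shows "\<exists>X. ideal_in DD X \<and> X \<noteq> {0} \<and> module_iso_sets scale Mi (*) X"
proof -
  have dom: "is_domain_at e" using DK by (simp add: dedekind_at_def)
  have e0: "e \<noteq> 0" using dom by (simp add: is_domain_at_def)
  obtain m0 where m0: "scale e m0 \<noteq> 0" using FM e0 unfolding faithful_module_def by blast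
  define m where "m = scale e m0"
  have mM: "m \<in> Mi" unfolding m_def by (rule rangeI)
  have m0': "m \<noteq> 0" using m0 m_def by simp
  have me: "scale e m = m" using mM Mi_iff by simp
  obtain I where I: "\<forall>r\<in>I. \<forall>y. \<exists>s. scale r y = scale s m"
     "\<forall>T. subspace T \<longrightarrow> (\<forall>r\<in>I. \<forall>y. scale r y \<in> T) \<longrightarrow> m \<in> T"
    using mult_gen[OF MM, of m] by blast
  obtain r y where ry: "r \<in> I" "scale e (scale r y) \<noteq> 0"
  proof -
    have "\<not> (\<forall>r\<in>I. \<forall>y. scale r y \<in> {z. scale e z = 0})"
    proof
      assume "\<forall>r\<in>I. \<forall>y. scale r y \<in> {z. scale e z = 0}"
      then have "m \<in> {z. scale e z = 0}" using I(2) kernel_subspace by blast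
      then show False using me m0' by simp
    qed
    then show ?thesis using that by blast
  qed
  define a where "a = e * r"
  have aD: "a \<in> DD" unfolding a_def by (rule Dmult1[OF De])
  have a0: "a \<noteq> 0" using ry(2) unfolding a_def by auto
  have aM: "\<exists>d\<in>DD. scale a z = scale d m" if z: "z \<in> Mi" for z
  proof -
    obtain s where s: "scale r z = scale s m" using I(1) ry(1) by blast
    have "scale a z = scale r (scale e z)" unfolding a_def by (simp add: mult.commute)
    also have "\<dots> = scale r z" using z Mi_iff by simp
    also have "\<dots> = scale s m" by (rule s)
    also have "\<dots> = scale s (scale e m)" using me by simp
    also have "\<dots> = scale (s * e) m" by simp
    finally show ?thesis using Dmult2[OF De, of s] by blast
  qed
  have uniq: "d = d'" if "d \<in> DD" "d' \<in> DD" "scale d m = scale d' m" for d d'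
  proof (rule ccontr)
    assume "d \<noteq> d'"
    moreover have "scale (d - d') m = 0" using that(3) by (simp add: scale_left_diff_distrib)
    ultimately have "m = 0" using TF[OF FM MM dom mM Ddiff[OF that(1,2)]] by simp
    then show False using m0' by simp
  qed
  define phi where "phi z = (THE d. d \<in> DD \<and> scale a z = scale d m)" for z
  have phiP: "phi z \<in> DD \<and> scale a z = scale (phi z) m" if z: "z \<in> Mi" for z
  proof -
    have "\<exists>!d. d \<in> DD \<and> scale a z = scale d m"
      using aM[OF z] uniq by (metis (no_types, lifting))
    then show ?thesis unfolding phi_def by (rule theI')
  qed
  have phiE: "phi z = d" if "z \<in> Mi" "d \<in> DD" "scale a z = scale d m" for z d
    using uniq[of "phi z" d] phiP[OF that(1)] that by simp
  have phi_add: "phi (z + z') = phi z + phi z'" if "z \<in> Mi" "z' \<in> Mi" for z z'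
  proof (rule phiE)
    show "z + z' \<in> Mi" using Mi_add that by blast
    show "phi z + phi z' \<in> DD" using phiP that by blast
    show "scale a (z + z') = scale (phi z + phi z') m"
      using phiP[OF that(1)] phiP[OF that(2)] by (simp add: scale_right_distrib scale_left_distrib)
  qed
  have phi_sc: "phi (scale c z) = c * phi z" if z: "z \<in> Mi" for z c
  proof (rule phiE)
    show "scale c z \<in> Mi" using Mi_scale z by blast
    show "c * phi z \<in> DD" using phiP z by blast
    have "scale a (scale c z) = scale c (scale a z)" by (rule scale_left_commute)
    also have "\<dots> = scale c (scale (phi z) m)" using phiP z by simp
    also have "\<dots> = scale (c * phi z) m" by simp
    finally show "scale a (scale c z) = scale (c * phi z) m" .
  qed
  have phi0: "phi 0 = 0" by (rule phiE) (use Mi_0 in auto)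
  have phim: "phi m = a" by (rule phiE[OF mM aD refl])
  define X where "X = phi ` Mi"
  have Xi: "ideal_in DD X"
  proof (rule ideal_inI)
    show "X \<subseteq> DD" unfolding X_def using phiP by blast
    show "0 \<in> X" unfolding X_def using phi0 Mi_0 by (metis image_eqI)
    show "x + y \<in> X" if xy: "x \<in> X" "y \<in> X" for x y
    proof -
      obtain z where z: "z \<in> Mi" "x = phi z" using xy(1) unfolding X_def by (auto elim!: imageE)
      obtain z' where z': "z' \<in> Mi" "y = phi z'" using xy(2) unfolding X_def by (auto elim!: imageE)
      have "x + y = phi (z + z')" using phi_add z z' by simp
      then show ?thesis unfolding X_def using Mi_add[OF z(1) z'(1)] by (rule image_eqI)
    qed
    show "c * x \<in> X" if xX: "x \<in> X" for x c
    proof -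
      obtain z where z: "z \<in> Mi" "x = phi z" using xX unfolding X_def by (auto elim!: imageE)
      have "c * x = phi (scale c z)" using phi_sc z by simp
      then show ?thesis unfolding X_def using Mi_scale[OF z(1)] by (rule image_eqI)
    qed
  qed
  have X0: "X \<noteq> {0}"
  proof
    assume "X = {0}"
    moreover have "a \<in> X" unfolding X_def using phim mM by (metis image_eqI)
    ultimately show False using a0 by simp
  qed
  have inj: "inj_on phi Mi"
  proof (rule inj_onI)
    fix z z' assume zz: "z \<in> Mi" "z' \<in> Mi" "phi z = phi z'"
    have "scale a z = scale a z'" using phiP[OF zz(1)] phiP[OF zz(2)] zz(3) by simp
    then have "scale a (z - z') = 0" by (simp add: scale_right_diff_distrib)
    then have "z - z' = 0" using TF[OF FM MM dom Mi_diff[OF zz(1,2)] aD a0] by simp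
    then show "z = z'" by simp
  qed
  have "module_iso_sets scale Mi (*) X"
    unfolding module_iso_sets_def
  proof (intro exI conjI ballI allI)
    show "bij_betw phi Mi X" unfolding bij_betw_def X_def using inj by simp
    show "phi (x + y) = phi x + phi y" if "x \<in> Mi" "y \<in> Mi" for x y using phi_add that by blast
    show "phi (scale c x) = c * phi x" if "x \<in> Mi" for x c using phi_sc that by blast
  qed
  then show ?thesis using Xi X0 by blast
qed

end



context mfr
begin

lemma fwd_loc:
  assumes FM: "faithful_module scale" and MM: "multiplication_module scale" and L: "artinian_local_pir_at e"
  shows "module_iso_sets scale Mi (*) DD"
proof -
  have e0: "e \<noteq> 0" using local_facts(1)[OF L] .
  obtain p K where p: "p \<in> DD" "p ^ K = 0" and dec: "\<And>u. u \<in> DD \<Longrightarrow> (\<exists>d\<in>DD. u = d * p) \<or> (\<exists>w\<in>DD. w * u = e)"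
    using local_facts(2)[OF L] by blast
  have "\<exists>m\<in>Mi. \<not> (\<exists>z\<in>Mi. m = scale p z)"
  proof (rule ccontr)
    assume "\<not> ?thesis"
    then have H: "\<And>w. w \<in> Mi \<Longrightarrow> \<exists>z\<in>Mi. w = scale p z" by blast
    have pow: "\<exists>z\<in>Mi. w = scale (p ^ k) z" if w: "w \<in> Mi" for w k
    proof (induction k)
      case 0 then show ?case using w by simp
    next
      case (Suc k)
      then obtain z where z: "z \<in> Mi" "w = scale (p ^ k) z" by blast
      obtain z' where z': "z' \<in> Mi" "z = scale p z'" using H[OF z(1)] by blast
      have "w = scale (p ^ Suc k) z'" using z(2) z'(2) by (simp add: mult.commute)
      then show ?case using z'(1) by blast
    qed
    have "scale e m0 = 0" for m0
    proof -
      obtain z where "z \<in> Mi" "scale e m0 = scale (p ^ K) z" using pow[of "scale e m0" K] by blast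
      then show ?thesis using p(2) by simp
    qed
    then show False using FM e0 unfolding faithful_module_def by blast
  qed
  then obtain m where mM: "m \<in> Mi" and mp: "\<not> (\<exists>z\<in>Mi. m = scale p z)" by blast
  have me: "scale e m = m" using mM Mi_iff by simp
  obtain I where I: "\<forall>r\<in>I. \<forall>y. \<exists>s. scale r y = scale s m"
     "\<forall>T. subspace T \<longrightarrow> (\<forall>r\<in>I. \<forall>y. scale r y \<in> T) \<longrightarrow> m \<in> T"
    using mult_gen[OF MM, of m] by blast
  let ?T = "{w. \<exists>z\<in>Mi. scale e w = scale p z}"
  have Tsub: "subspace ?T"
    unfolding subspace_def
  proof (intro conjI ballI allI)
    have "scale e 0 = scale p 0" by simp
    then show "0 \<in> ?T" using Mi_0 by blast
    fix x y assume x: "x \<in> ?T" and y: "y \<in> ?T"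
    then obtain z z' where z: "z \<in> Mi" "scale e x = scale p z" "z' \<in> Mi" "scale e y = scale p z'" by blast
    then have "scale e (x + y) = scale p (z + z')" by (simp add: scale_right_distrib)
    then show "x + y \<in> ?T" using Mi_add[OF z(1) z(3)] by blast
  next
    fix c x assume x: "x \<in> ?T"
    then obtain z where z: "z \<in> Mi" "scale e x = scale p z" by blast
    have "scale e (scale c x) = scale c (scale e x)" by (rule scale_left_commute)
    also have "\<dots> = scale c (scale p z)" by (simp only: z(2))
    also have "\<dots> = scale p (scale c z)" by (rule scale_left_commute)
    finally show "scale c x \<in> ?T" using Mi_scale[OF z(1)] by blast
  qed
  obtain r where r: "r \<in> I" "\<not> (\<exists>d\<in>DD. e * r = d * p)"
  proof -
    have "\<not> (\<forall>r\<in>I. \<exists>d\<in>DD. e * r = d * p)"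
    proof
      assume A: "\<forall>r\<in>I. \<exists>d\<in>DD. e * r = d * p"
      have "\<forall>r\<in>I. \<forall>y. scale r y \<in> ?T"
      proof (intro ballI allI)
        fix r y assume "r \<in> I"
        then obtain d where d: "d \<in> DD" "e * r = d * p" using A by blast
        have "scale e (scale r y) = scale (e * r) y" by simp
        also have "\<dots> = scale (p * d) y" using d(2) by (simp add: mult.commute)
        also have "\<dots> = scale p (scale d y)" by simp
        finally show "scale r y \<in> ?T" using Mi_D[OF d(1)] by blast
      qed
      then have "m \<in> ?T" using I(2) Tsub by blast
      then show False using me mp by auto
    qed
    then show ?thesis using that by blast
  qed
  have uD: "e * r \<in> DD" by (rule Dmult1[OF De])
  obtain w where w: "w \<in> DD" "w * (e * r) = e" using dec[OF uD] r(2) by blast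
  have surj: "\<exists>c\<in>DD. z = scale c m" if z: "z \<in> Mi" for z
  proof -
    obtain s where s: "scale r z = scale s m" using I(1) r(1) by blast
    have ez: "scale e z = z" using z Mi_iff by simp
    have "z = scale (w * (e * r)) z" using w(2) ez by simp
    also have "\<dots> = scale w (scale r (scale e z))" by (simp add: ac_simps)
    also have "\<dots> = scale w (scale s m)" using ez s by simp
    also have "\<dots> = scale w (scale s (scale e m))" using me by simp
    also have "\<dots> = scale (e * (w * s)) m" by (simp add: ac_simps)
    finally show ?thesis using Dmult1[OF De, of "w * s"] by blast
  qed
  define g where "g d = scale d m" for d
  have inj: "inj_on g DD"
  proof (rule inj_onI)
    fix d d' assume dd: "d \<in> DD" "d' \<in> DD" "g d = g d'"
    have dm: "scale (d - d') m = 0" using dd(3) unfolding g_def by (simp add: scale_left_diff_distrib)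
    have "scale (d - d') z = 0" if z: "z \<in> Mi" for z
    proof -
      obtain c where c: "z = scale c m" using surj[OF z] by blast
      have "scale (d - d') z = scale c (scale (d - d') m)" unfolding c by (rule scale_left_commute)
      then show ?thesis using dm by simp
    qed
    then have "d - d' = 0" using F0[OF FM Ddiff[OF dd(1,2)]] by blast
    then show "d = d'" by simp
  qed
  have gim: "g ` DD = Mi"
  proof
    show "g ` DD \<subseteq> Mi" unfolding g_def using Mi_D by blast
    show "Mi \<subseteq> g ` DD"
    proof
      fix z assume "z \<in> Mi"
      then obtain c where "c \<in> DD" "z = scale c m" using surj by blast
      then show "z \<in> g ` DD" unfolding g_def by (rule rev_image_eqI)
    qed
  qed
  show ?thesis
  proof (rule iso_sym[of g])
    show "bij_betw g DD Mi" unfolding bij_betw_def using inj gim by blast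
    show "g (x + y) = g x + g y" for x y unfolding g_def by (rule scale_left_distrib)
    show "g (c * x) = scale c (g x)" for c x unfolding g_def by simp
    show "x + y \<in> DD" if "x \<in> DD" "y \<in> DD" for x y using that by blast
    show "c * x \<in> DD" if "x \<in> DD" for c x using that by blast
  qed
qed

end



lemma mfrI: "e * e = e \<Longrightarrow> module scale \<Longrightarrow> mfr e scale"
  unfolding mfr_def fr_def by simp

theorem theorem1p3:
  fixes scale :: "'a::comm_ring_1 \<Rightarrow> 'm::ab_group_add \<Rightarrow> 'm"
    and e :: "nat \<Rightarrow> 'a" and n :: nat
  assumes mod: "module scale"
    and idem: "\<And>i. i < n \<Longrightarrow> e i * e i = e i"
    and orth: "\<And>i j. i < n \<Longrightarrow> j < n \<Longrightarrow> i \<noteq> j \<Longrightarrow> e i * e j = 0"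
    and sum1: "(\<Sum>i<n. e i) = 1"
    and factors: "\<And>i. i < n \<Longrightarrow> dedekind_at (e i) \<or> artinian_local_pir_at (e i)"
  shows "(faithful_module scale \<and> multiplication_module scale) \<longleftrightarrow>
    (\<forall>i<n. module_iso_sets scale (range (scale (e i))) (*) (factor_ring (e i))
       \<or> (dedekind_at (e i) \<and>
          (\<exists>I. ideal_in (factor_ring (e i)) I \<and> I \<noteq> {0} \<and>
               module_iso_sets scale (range (scale (e i))) (*) I)))"
proof -
  interpret module scale by (rule mod)
  have M: "\<And>i. i < n \<Longrightarrow> mfr (e i) scale" using mfrI[OF idem mod] by blast
  show ?thesis
  proof
    assume A: "faithful_module scale \<and> multiplication_module scale"
    show "\<forall>i<n. module_iso_sets scale (range (scale (e i))) (*) (factor_ring (e i))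
       \<or> (dedekind_at (e i) \<and>
          (\<exists>I. ideal_in (factor_ring (e i)) I \<and> I \<noteq> {0} \<and>
               module_iso_sets scale (range (scale (e i))) (*) I))"
    proof (intro allI impI)
      fix i assume i: "i < n"
      show "module_iso_sets scale (range (scale (e i))) (*) (factor_ring (e i))
       \<or> (dedekind_at (e i) \<and>
          (\<exists>I. ideal_in (factor_ring (e i)) I \<and> I \<noteq> {0} \<and>
               module_iso_sets scale (range (scale (e i))) (*) I))"
      proof (cases "dedekind_at (e i)")
        case True
        then show ?thesis using mfr.fwd_ded[OF M[OF i]] A by blast
      next
        case False
        then have "artinian_local_pir_at (e i)" using factors[OF i] by blast
        then show ?thesis using mfr.fwd_loc[OF M[OF i]] A by blast
      qed
    qed
  next
    assume H: "\<forall>i<n. module_iso_sets scale (range (scale (e i))) (*) (factor_ring (e i))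
       \<or> (dedekind_at (e i) \<and>
          (\<exists>I. ideal_in (factor_ring (e i)) I \<and> I \<noteq> {0} \<and>
               module_iso_sets scale (range (scale (e i))) (*) I))"
    have P: "\<exists>X g. bij_betw g (range (scale (e i))) X
        \<and> (\<forall>x\<in>range (scale (e i)). \<forall>y\<in>range (scale (e i)). g (x + y) = g x + g y)
        \<and> (\<forall>r. \<forall>x\<in>range (scale (e i)). g (scale r x) = r * g x)
        \<and> ideal_in (factor_ring (e i)) X
        \<and> (X = factor_ring (e i) \<or> (dedekind_at (e i) \<and> X \<noteq> {0}))" if i: "i < n" for i
    proof -
      interpret fr "e i" by (rule M[OF i, unfolded mfr_def, THEN conjunct1])
      from H i show ?thesis
      proof (elim allE impE disjE conjE exE)
        assume "module_iso_sets scale (range (scale (e i))) (*) (factor_ring (e i))"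
        then show ?thesis using ideal_D unfolding module_iso_sets_def by blast
      next
        fix X assume "dedekind_at (e i)" "ideal_in (factor_ring (e i)) X" "X \<noteq> {0}"
          "module_iso_sets scale (range (scale (e i))) (*) X"
        then show ?thesis unfolding module_iso_sets_def by blast
      qed simp
    qed
    have faith: "faithful_module scale"
      unfolding faithful_module_def
    proof (intro allI impI)
      fix r assume r: "\<forall>m. scale r m = 0"
      have "r * e i = 0" if i: "i < n" for i
      proof -
        obtain X g where g: "bij_betw g (range (scale (e i))) X"
          "\<forall>x\<in>range (scale (e i)). \<forall>y\<in>range (scale (e i)). g (x + y) = g x + g y"
          "\<forall>r. \<forall>x\<in>range (scale (e i)). g (scale r x) = r * g x"
          "ideal_in (factor_ring (e i)) X"
          "X = factor_ring (e i) \<or> (dedekind_at (e i) \<and> X \<noteq> {0})" using P[OF i] by blast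
        have X: "X = factor_ring (e i) \<or> (is_domain_at (e i) \<and> ideal_in (factor_ring (e i)) X \<and> X \<noteq> {0})"
          using g(4,5) by (auto simp: dedekind_at_def)
        show ?thesis using mfr.faith_factor[OF M[OF i] g(1) _ _ X] g(2,3) r by blast
      qed
      then have "(\<Sum>i<n. r * e i) = 0" by simp
      then show "r = 0" using sum1 by (simp add: sum_distrib_left[symmetric])
    qed
    have mult: "multiplication_module scale"
      unfolding multiplication_module_def
    proof (intro allI impI)
      fix N assume N: "subspace N"
      let ?I = "{r. \<forall>m. scale r m \<in> N}"
      have rx: "scale (r * x) m \<in> N" if "x \<in> ?I" for r x m
      proof -
        have "scale r (scale x m) \<in> N" using subspace_scale[OF N] that by blast
        then show ?thesis by simp
      qed
      have Ii: "ideal ?I" unfolding ideal_def ideal_in_def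
        using subspace_0[OF N] subspace_add[OF N] rx
        by (auto simp: scale_left_distrib)
      have "N = span {scale r m | r m. r \<in> ?I}"
      proof
        show "span {scale r m | r m. r \<in> ?I} \<subseteq> N" using N by (intro span_minimal) auto
        show "N \<subseteq> span {scale r m | r m. r \<in> ?I}"
        proof
          fix z assume z: "z \<in> N"
          have "z = scale (\<Sum>i<n. e i) z" using sum1 by simp
          also have "\<dots> = (\<Sum>i<n. scale (e i) z)" by (rule scale_sum_left)
          finally have zs: "z = (\<Sum>i<n. scale (e i) z)" .
          have "scale (e i) z \<in> span {scale r m | r m. r \<in> ?I}" if i: "i < n" for i
          proof -
            obtain X g where g: "bij_betw g (range (scale (e i))) X"
              "\<forall>x\<in>range (scale (e i)). \<forall>y\<in>range (scale (e i)). g (x + y) = g x + g y"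
              "\<forall>r. \<forall>x\<in>range (scale (e i)). g (scale r x) = r * g x"
              "ideal_in (factor_ring (e i)) X"
              "X = factor_ring (e i) \<or> (dedekind_at (e i) \<and> X \<noteq> {0})" using P[OF i] by blast
            have MX: "fr.MXprop (e i) X"
              using g(4,5) fr.MX_D[OF M[OF i, unfolded mfr_def, THEN conjunct1]]
                fr.MX_ded[OF M[OF i, unfolded mfr_def, THEN conjunct1]] by blast
            show ?thesis
              using mfr.mult_factor[OF M[OF i] g(4) g(1) _ _ MX N subspace_scale[OF N z] rangeI] g(2,3) by blast
          qed
          then show "z \<in> span {scale r m | r m. r \<in> ?I}" using zs span_sum
            by (metis (no_types, lifting) lessThan_iff)
        qed
      qed
      then show "\<exists>I. ideal I \<and> N = span {scale r m | r m. r \<in> I}" using Ii by blast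
    qed
    show "faithful_module scale \<and> multiplication_module scale" using faith mult by blast
  qed
qed


end
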